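(* For an integer $n$, let $q=P^{+}(g(n))$ and define \[ \varepsilon_1=\sup_{x\ge q/2}\left|\frac{\theta(x)}{x}-1\right|,\qquad \varepsilon_2=\max\left(1-\eta_3\!\left(\frac q4\right),\ \left(\frac{\log q}{\sqrt q}\right)^2\right)<1,\qquad \varepsilon=\varepsilon_1+\sqrt{\varepsilon_2}. \] Then, as $n\to+\infty$, \[ q=P^{+}(g(n))\le \log g(n)\,\big(1+O(\varepsilon)\big). \]
   Context: $g(n)$ is the maximal order of an element of $\mathfrak S_n$, i.e. $g(n)=\max\{M\ge1:\ell(M)\le n\}$ with $\ell$ additive, $\ell(1)=0$, $\ell(p^a)=p^a$; $P^{+}(M)$ is the largest prime factor of $M$. $\theta(x)=\sum_{p\le x}\log p$. $p_i$ is the $i$-th prime and for $x\ge p_3=5$, $\eta_3(x)=\min\{p_{i-3}/p_i:\ p_i>x\}$. *)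

theory Defs
  imports "HOL-Analysis.Analysis" "HOL-Computational_Algebra.Primes" "HOL-Library.Infinite_Set"
begin

definition ell :: "nat \<Rightarrow> nat" where
  "ell M = (\<Sum>p\<in>prime_factors M. p ^ multiplicity p M)"

(* Landau's function: maximal order of an element of S_n *)
definition landau_g :: "nat \<Rightarrow> nat" where
  "landau_g n = Max {M. M \<ge> 1 \<and> ell M \<le> n}"

definition Pplus :: "nat \<Rightarrow> nat" where
  "Pplus M = Max (prime_factors M)"

definition cheb_theta :: "real \<Rightarrow> real" where
  "cheb_theta x = (\<Sum>p\<in>{p::nat. prime p \<and> real p \<le> x}. ln (real p))"

(* the i-th prime, 1-indexed: p_1 = 2, p_2 = 3, ... *)
definition pr :: "nat \<Rightarrow> nat" where
  "pr i = enumerate {p::nat. prime p} (i - 1)"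

(* eta_3(x) = min { p_{i-3} / p_i : p_i > x }  (for x >= 5 this forces i >= 4) *)
definition eta3 :: "real \<Rightarrow> real" where
  "eta3 x = Inf {real (pr (i - 3)) / real (pr i) | i. i \<ge> 4 \<and> real (pr i) > x}"

definition eps1 :: "nat \<Rightarrow> real" where
  "eps1 n = (let q = real (Pplus (landau_g n)) in
     Sup {\<bar>cheb_theta x / x - 1\<bar> | x. x \<ge> q / 2})"

definition eps2 :: "nat \<Rightarrow> real" where
  "eps2 n = (let q = real (Pplus (landau_g n)) in
     max (1 - eta3 (q / 4)) ((ln q / sqrt q) ^ 2))"

definition eps :: "nat \<Rightarrow> real" where
  "eps n = eps1 n + sqrt (eps2 n)"

end

theory Submission
  imports Defs "HOL-Real_Asymp.Real_Asymp"
begin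


definition cc :: "nat \<Rightarrow> nat \<Rightarrow> nat" where
  "cc k p = (if k = 0 then 0 else p ^ k)"

lemma ell_prod:
  assumes "finite S" "\<forall>p\<in>S. prime p"
  shows "ell (\<Prod>p\<in>S. p ^ f p) = (\<Sum>p\<in>S. cc (f p) p)"
proof -
  define N where "N = (\<Prod>p\<in>S. p ^ f p)"
  have mult: "multiplicity p N = (if p \<in> S then f p else 0)" if "prime p" for p
    unfolding N_def using assms that by (intro multiplicity_prod_prime_powers) auto
  have pf: "prime_factors N = {p\<in>S. f p > 0}"
    unfolding prime_factors_multiplicity using mult assms by (auto split: if_splits)
  have "ell N = (\<Sum>p\<in>{p\<in>S. f p > 0}. p ^ f p)"
    unfolding ell_def pf using mult assms by (intro sum.cong) auto
  also have "\<dots> = (\<Sum>p\<in>S. cc (f p) p)"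
    using assms(1) by (subst sum.inter_filter) (auto simp: cc_def intro!: sum.cong)
  finally show ?thesis unfolding N_def .
qed

lemma ell_one: "ell 1 = 0" by (simp add: ell_def)
lemma ell_Suc0: "ell (Suc 0) = 0" by (simp add: ell_def)

lemma ell_ge_pp:
  assumes "p \<in> prime_factors M"
  shows "p ^ multiplicity p M \<le> ell M"
  unfolding ell_def using assms
  by (intro member_le_sum) auto

lemma landau_set_finite: "finite {M. M \<ge> 1 \<and> ell M \<le> n}"
proof (rule finite_subset[of _ "{..n^n}"])
  show "{M. M \<ge> 1 \<and> ell M \<le> n} \<subseteq> {..n^n}"
  proof
    fix M assume M: "M \<in> {M. M \<ge> 1 \<and> ell M \<le> n}"
    hence M1: "M \<ge> 1" and le: "ell M \<le> n" by auto
    have pp: "p ^ multiplicity p M \<le> n" if "p \<in> prime_factors M" for p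
      using ell_ge_pp[OF that] le by linarith
    have pn: "p \<le> n" if "p \<in> prime_factors M" for p
    proof -
      have "multiplicity p M > 0" using that prime_factors_multiplicity by auto
      hence "p \<le> p ^ multiplicity p M"
        using that by (metis in_prime_factors_imp_prime le_refl less_one not_less power_increasing_iff power_one_right prime_gt_1_nat linorder_not_less nat_less_le self_le_power)
      thus ?thesis using pp[OF that] by linarith
    qed
    have sub: "prime_factors M \<subseteq> {1..n}"
    proof
      fix p assume "p \<in> prime_factors M"
      thus "p \<in> {1..n}" using pn[of p] prime_gt_0_nat[of p] by (auto dest: in_prime_factors_imp_prime)
    qed
    hence cardle: "card (prime_factors M) \<le> n"
      by (metis card_atLeastAtMost card_mono diff_Suc_1 finite_atLeastAtMost)
    have "M = (\<Prod>p\<in>prime_factors M. p ^ multiplicity p M)"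
      using M1 prime_factorization_nat by auto
    also have "\<dots> \<le> (\<Prod>p\<in>prime_factors M. n)"
      by (intro prod_mono) (use pp in auto)
    also have "\<dots> = n ^ card (prime_factors M)" by simp
    also have "\<dots> \<le> n ^ n"
    proof (cases "n = 0")
      case True thus ?thesis using cardle by simp
    next
      case False thus ?thesis using cardle by (intro power_increasing) auto
    qed
    finally show "M \<in> {..n^n}" by simp
  qed
qed simp

lemma landau_mem: "landau_g n \<ge> 1 \<and> ell (landau_g n) \<le> n"
proof -
  have "landau_g n \<in> {M. M \<ge> 1 \<and> ell M \<le> n}"
    unfolding landau_g_def using landau_set_finite
    by (intro Max_in) (auto intro!: exI[of _ 1] simp: ell_Suc0)
  thus ?thesis by auto
qed

lemma landau_max: "M \<ge> 1 \<Longrightarrow> ell M \<le> n \<Longrightarrow> M \<le> landau_g n"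
  unfolding landau_g_def using landau_set_finite by (intro Max_ge) auto


definition upc :: "nat \<Rightarrow> nat \<Rightarrow> nat" where
  "upc M p = (if multiplicity p M = 0 then p else p ^ multiplicity p M * (p - 1))"
definition dnc :: "nat \<Rightarrow> nat \<Rightarrow> nat" where
  "dnc M p = (if multiplicity p M = 1 then p else p ^ (multiplicity p M - 1) * (p - 1))"

lemma ppow: "(p::nat) \<ge> 1 \<Longrightarrow> p ^ k + p ^ k * (p - 1) = p ^ Suc k"
  by (cases p) (simp_all add: algebra_simps)
lemma cc_down: assumes "(p::nat) \<ge> 1" "v \<ge> 1"
  shows "cc (v - 1) p + (if v = 1 then p else p ^ (v - 1) * (p - 1)) = cc v p"
proof (cases "v = 1")
  case True thus ?thesis by (simp add: cc_def)
next
  case False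
  then obtain k where k: "v = Suc (Suc k)" using assms(2) by (cases v; cases "v - 1") auto
  show ?thesis using ppow[OF assms(1), of "Suc k"] by (simp add: k cc_def)
qed
lemma cc_up: assumes "(p::nat) \<ge> 1"
  shows "cc (v + 1) p = cc v p + (if v = 0 then p else p ^ v * (p - 1))"
  using ppow[OF assms(1), of v] by (simp add: cc_def)

lemma exchange:
  fixes n :: nat and D U :: "nat set"
  defines "M \<equiv> landau_g n"
  assumes fin: "finite D" "finite U" and disj: "D \<inter> U = {}"
    and primes: "\<forall>p\<in>U. prime p" and DM: "D \<subseteq> prime_factors M"
    and budget: "ell M + (\<Sum>p\<in>U. upc M p) \<le> n + (\<Sum>p\<in>D. dnc M p)"
    and prodlt: "\<Prod>D < \<Prod>U"
  shows False
proof -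
  define A where "A = prime_factors M \<union> U"
  define v where "v p = multiplicity p M" for p
  define f where "f p = v p - (if p \<in> D then 1 else 0) + (if p \<in> U then 1 else 0)" for p
  define N where "N = (\<Prod>p\<in>A. p ^ f p)"
  have finA: "finite A" unfolding A_def using fin by auto
  have primeA: "\<forall>p\<in>A. prime p" unfolding A_def using primes by auto
  have DA: "D \<subseteq> A" using DM unfolding A_def by auto
  have UA: "U \<subseteq> A" unfolding A_def by auto
  have vD: "v p \<ge> 1" if "p \<in> D" for p
  proof -
    have "p \<in> prime_factors M" using that DM by blast
    hence "multiplicity p M > 0" unfolding prime_factors_multiplicity by blast
    thus ?thesis unfolding v_def by simp
  qed
  have v0: "v p = 0" if "p \<notin> prime_factors M" "prime p" for p
  proof -
    have "\<not> multiplicity p M > 0" using that unfolding prime_factors_multiplicity by auto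
    thus ?thesis unfolding v_def by simp
  qed
  have M0: "M \<ge> 1" unfolding M_def using landau_mem by auto
  have ellN: "ell N = (\<Sum>p\<in>A. cc (f p) p)" unfolding N_def by (rule ell_prod[OF finA primeA])
  have ellM: "ell M = (\<Sum>p\<in>A. cc (v p) p)"
  proof -
    have "ell M = (\<Sum>p\<in>prime_factors M. cc (v p) p)"
      unfolding ell_def cc_def v_def using prime_factors_multiplicity by (intro sum.cong) auto
    also have "\<dots> = (\<Sum>p\<in>A. cc (v p) p)"
      using finA primeA v0 by (intro sum.mono_neutral_left) (auto simp: A_def cc_def)
    finally show ?thesis .
  qed
  have pt: "cc (f p) p + (if p \<in> D then dnc M p else 0) = cc (v p) p + (if p \<in> U then upc M p else 0)"
    if "p \<in> A" for p
  proof -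
    have "prime p" using primeA that by blast
    hence pp: "p \<ge> 1" using prime_gt_0_nat by (simp add: Suc_le_eq)
    consider "p \<in> D" | "p \<in> U" | "p \<notin> D" "p \<notin> U" by blast
    thus ?thesis
    proof cases
      case 1
      hence "p \<notin> U" using disj by auto
      have fv: "f p = v p - 1" using 1 \<open>p \<notin> U\<close> unfolding f_def by simp
      have dn: "dnc M p = (if v p = 1 then p else p ^ (v p - 1) * (p - 1))"
        unfolding dnc_def v_def ..
      show ?thesis using cc_down[OF pp vD[OF 1]] 1 \<open>p \<notin> U\<close> fv dn by simp
    next
      case 2
      hence "p \<notin> D" using disj by auto
      have fv: "f p = v p + 1" using 2 \<open>p \<notin> D\<close> unfolding f_def by simp
      have up: "upc M p = (if v p = 0 then p else p ^ v p * (p - 1))"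
        unfolding upc_def v_def ..
      have "cc (f p) p = cc (v p) p + upc M p" unfolding fv up by (rule cc_up[OF pp])
      thus ?thesis using 2 \<open>p \<notin> D\<close> by simp
    qed (simp add: f_def)
  qed
  have "(\<Sum>p\<in>A. cc (f p) p + (if p \<in> D then dnc M p else 0)) = (\<Sum>p\<in>A. cc (v p) p + (if p \<in> U then upc M p else 0))"
    using pt by (rule sum.cong[OF refl])
  hence "ell N + (\<Sum>p\<in>D. dnc M p) = ell M + (\<Sum>p\<in>U. upc M p)"
    unfolding ellN ellM sum.distrib using finA DA UA
    by (simp add: sum.If_cases Int_absorb1 Int_absorb2 inf_commute)
  hence ellNn: "ell N \<le> n" using budget by linarith
  have ptp: "p ^ f p * (if p \<in> D then p else 1) = p ^ v p * (if p \<in> U then p else 1)" if "p \<in> A" for p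
  proof -
    have "f p + (if p \<in> D then 1 else 0) = v p + (if p \<in> U then 1 else 0)"
      using vD unfolding f_def by auto
    hence "p ^ (f p + (if p \<in> D then 1 else 0)) = p ^ (v p + (if p \<in> U then 1 else 0))" by simp
    thus ?thesis by (cases "p \<in> D"; cases "p \<in> U") (simp_all only: if_True if_False power_add power_one_right power_0 mult_1_right)
  qed
  have MA: "M = (\<Prod>p\<in>A. p ^ v p)"
  proof -
    have "M = (\<Prod>p\<in>prime_factors M. p ^ v p)" unfolding v_def using M0 prime_factorization_nat by auto
    also have "\<dots> = (\<Prod>p\<in>A. p ^ v p)"
      using finA primeA v0 by (intro prod.mono_neutral_left) (auto simp: A_def)
    finally show ?thesis .
  qed
  have "(\<Prod>p\<in>A. p ^ f p * (if p \<in> D then p else 1)) = (\<Prod>p\<in>A. p ^ v p * (if p \<in> U then p else 1))"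
    using ptp by (rule prod.cong[OF refl])
  hence NM: "N * \<Prod>D = M * \<Prod>U"
    unfolding prod.distrib N_def MA[symmetric] using finA DA UA
    by (simp add: prod.If_cases Int_absorb1 Int_absorb2 inf_commute)
  have "\<Prod>D > 0" using DM by (auto intro!: prod_pos dest: in_prime_factors_imp_prime prime_gt_0_nat)
  have "M * \<Prod>D < M * \<Prod>U" using prodlt M0 by simp
  hence "N * \<Prod>D > M * \<Prod>D" using NM by simp
  hence NgtM: "N > M" using \<open>\<Prod>D > 0\<close> by simp
  hence "N \<ge> 1" using M0 by simp
  hence "N \<le> M" unfolding M_def using ellNn landau_max by blast
  thus False using NgtM by simp
qed


definition primorial :: "nat \<Rightarrow> nat" where
  "primorial n = \<Prod>{p. prime p \<and> p \<le> n}"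

lemma fin_primes_le: "finite {p::nat. prime p \<and> p \<le> n}" by auto

lemma prod_primes_dvd:
  assumes "finite Q" "\<forall>p\<in>Q. prime p \<and> p dvd (N::nat)"
  shows "\<Prod>Q dvd N"
  using assms
proof (induction Q rule: finite_induct)
  case empty thus ?case by simp
next
  case (insert p Q)
  have "\<not> p dvd \<Prod>Q"
  proof
    assume "p dvd \<Prod>Q"
    then obtain r where "r \<in> Q" "p dvd r" using insert prime_dvd_prod_iff[of Q p id] by auto
    hence "p = r" using insert by (auto dest: primes_dvd_imp_eq)
    thus False using \<open>r \<in> Q\<close> insert by auto
  qed
  hence "coprime p (\<Prod>Q)" using insert by (intro prime_imp_coprime) auto
  thus ?case using insert by (simp add: divides_mult)
qed

lemma choose_odd_le: "(2*m+1) choose m \<le> 4 ^ m"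
proof -
  have s: "((2*m+1) choose m) = ((2*m+1) choose (m+1))"
    using binomial_symmetric[of m "2*m+1"] by simp
  have "((2*m+1) choose m) + ((2*m+1) choose (m+1)) = (\<Sum>k\<in>{m, m+1}. (2*m+1) choose k)" by simp
  also have "\<dots> \<le> (\<Sum>k\<le>2*m+1. (2*m+1) choose k)"
    by (intro sum_mono2) auto
  also have "\<dots> = 2 ^ (2*m+1)" by (rule choose_row_sum)
  finally have "2 * ((2*m+1) choose m) \<le> 2 * 4 ^ m" using s by (simp add: power_mult power_add)
  thus ?thesis by simp
qed

lemma primorial_split:
  "primorial (2*m+1) = primorial (m+1) * \<Prod>{p. prime p \<and> m+1 < p \<and> p \<le> 2*m+1}"
proof -
  have "{p. prime p \<and> p \<le> 2*m+1} = {p. prime p \<and> p \<le> m+1} \<union> {p. prime p \<and> m+1 < p \<and> p \<le> 2*m+1}" by auto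
  thus ?thesis unfolding primorial_def
    by (subst prod.union_disjoint[symmetric]) auto
qed

lemma primorial_mid_dvd: "\<Prod>{p. prime p \<and> m+1 < p \<and> p \<le> 2*m+1} dvd ((2*m+1) choose m)"
proof (rule prod_primes_dvd)
  show "finite {p. prime p \<and> m+1 < p \<and> p \<le> 2*m+1}" by auto
  show "\<forall>p\<in>{p. prime p \<and> m+1 < p \<and> p \<le> 2*m+1}. prime p \<and> p dvd ((2*m+1) choose m)"
  proof
    fix p assume p: "p \<in> {p. prime p \<and> m+1 < p \<and> p \<le> 2*m+1}"
    have e: "fact m * fact (m+1) * ((2*m+1) choose m) = (fact (2*m+1) :: nat)"
      using binomial_fact_lemma[of m "2*m+1"] by (simp add: algebra_simps)
    have "p dvd (fact (2*m+1) :: nat)" using p by (subst prime_dvd_fact_iff) auto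
    hence "p dvd fact m * fact (m+1) * ((2*m+1) choose m)" using e by simp
    moreover have "\<not> p dvd (fact m :: nat)" using p by (subst prime_dvd_fact_iff) auto
    moreover have "\<not> p dvd (fact (m+1) :: nat)" using p by (subst prime_dvd_fact_iff) auto
    ultimately show "prime p \<and> p dvd ((2*m+1) choose m)" using p by (auto simp: prime_dvd_mult_iff)
  qed
qed

lemma primorial_le: "primorial n \<le> 4 ^ n"
proof (induction n rule: less_induct)
  case (less n)
  consider "n = 0" | "n = 1" | "n = 2" | "n > 2" "even n" | "n > 2" "odd n" by linarith
  thus ?case
  proof cases
    case 1
    have E: "{p::nat. prime p \<and> p \<le> n} = {}" using 1 by (auto dest: prime_gt_0_nat)
    show ?thesis unfolding primorial_def E by simp
  next
    case 2
    have E: "{p::nat. prime p \<and> p \<le> n} = {}" using 2 by (auto dest: prime_gt_1_nat)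
    show ?thesis unfolding primorial_def E by simp
  next
    case 3
    have E: "{p::nat. prime p \<and> p \<le> n} = {2}" using 3 by (auto dest: prime_gt_1_nat)
    show ?thesis unfolding primorial_def E using 3 by simp
  next
    case 4
    have np: "\<not> prime n" using 4 prime_odd_nat by auto
    have "{p::nat. prime p \<and> p \<le> n} = {p. prime p \<and> p \<le> n - 1}"
    proof (rule set_eqI)
      fix p show "(p \<in> {p::nat. prime p \<and> p \<le> n}) = (p \<in> {p. prime p \<and> p \<le> n - 1})"
        using np by (cases "p = n") auto
    qed
    hence "primorial n = primorial (n - 1)" unfolding primorial_def by simp
    also have "\<dots> \<le> 4 ^ (n - 1)" using less 4 by simp
    also have "\<dots> \<le> 4 ^ n" by (intro power_increasing) auto
    finally show ?thesis .
  next
    case 5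
    then obtain m where m: "n = 2*m+1" by (metis oddE)
    have "m \<ge> 1" using 5 m by simp
    have "primorial n = primorial (m+1) * \<Prod>{p. prime p \<and> m+1 < p \<and> p \<le> 2*m+1}"
      using m primorial_split by simp
    also have "\<dots> \<le> 4 ^ (m+1) * 4 ^ m"
    proof (intro mult_le_mono)
      have "m+1 < n" using m \<open>m \<ge> 1\<close> by simp
      thus "primorial (m+1) \<le> 4 ^ (m+1)" using less by blast
      have "((2*m+1) choose m) > 0" by simp
      hence "\<Prod>{p. prime p \<and> m+1 < p \<and> p \<le> 2*m+1} \<le> ((2*m+1) choose m)"
        using primorial_mid_dvd by (intro dvd_imp_le) auto
      thus "\<Prod>{p. prime p \<and> m+1 < p \<and> p \<le> 2*m+1} \<le> 4 ^ m" using choose_odd_le order_trans by blast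
    qed
    also have "\<dots> = 4 ^ n" using m by (simp add: power_add[symmetric])
    finally show ?thesis .
  qed
qed

lemma theta_eq_ln_primorial:
  assumes "x \<ge> 0"
  shows "cheb_theta x = ln (real (primorial (nat \<lfloor>x\<rfloor>)))"
proof -
  have e: "{p::nat. prime p \<and> real p \<le> x} = {p. prime p \<and> p \<le> nat \<lfloor>x\<rfloor>}"
  proof (rule set_eqI)
    fix p :: nat
    have "(p \<le> nat \<lfloor>x\<rfloor>) = (real p \<le> x)" using assms by (simp add: le_nat_iff le_floor_iff)
    thus "(p \<in> {p::nat. prime p \<and> real p \<le> x}) = (p \<in> {p. prime p \<and> p \<le> nat \<lfloor>x\<rfloor>})" by simp
  qed
  have "cheb_theta x = (\<Sum>p\<in>{p. prime p \<and> p \<le> nat \<lfloor>x\<rfloor>}. ln (real p))"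
    unfolding cheb_theta_def e ..
  also have "\<dots> = ln (\<Prod>p\<in>{p. prime p \<and> p \<le> nat \<lfloor>x\<rfloor>}. real p)"
    by (subst ln_prod) (auto dest: prime_gt_0_nat)
  also have "\<dots> = ln (real (primorial (nat \<lfloor>x\<rfloor>)))" unfolding primorial_def by simp
  finally show ?thesis .
qed

lemma ln_4_less_2: "ln (4::real) < 2"
proof -
  have "ln (4::real) = 2 * ln 2" using ln_realpow[of 2 2] by simp
  thus ?thesis using ln_2_less_1 by simp
qed

lemma theta_upper: "cheb_theta x \<le> 2 * x" if "x \<ge> 0"
proof -
  have pos: "real (primorial (nat \<lfloor>x\<rfloor>)) > 0"
    unfolding primorial_def by (auto intro!: prod_pos dest: prime_gt_0_nat)
  have "cheb_theta x = ln (real (primorial (nat \<lfloor>x\<rfloor>)))" using theta_eq_ln_primorial that by simp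
  also have "\<dots> \<le> ln (4 ^ nat \<lfloor>x\<rfloor>)"
    using primorial_le pos by (subst ln_le_cancel_iff) (auto simp del: of_nat_power simp: of_nat_power[symmetric])
  also have "\<dots> = real (nat \<lfloor>x\<rfloor>) * ln 4" by (simp add: ln_realpow)
  also have "\<dots> \<le> x * ln 4" using that by (intro mult_right_mono) auto
  also have "\<dots> \<le> x * 2" using that ln_4_less_2 by (intro mult_left_mono) auto
  finally show ?thesis by simp
qed

lemma theta_nonneg: "cheb_theta x \<ge> 0"
  unfolding cheb_theta_def by (intro sum_nonneg) (auto dest: prime_gt_1_nat)


lemma Suc_div_eq: "(m::nat) > 0 \<Longrightarrow> Suc N div m = N div m + (if m dvd Suc N then 1 else 0)"
  by (simp add: div_Suc dvd_eq_mod_eq_0)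

lemma count_le: "v \<le> N \<Longrightarrow> (\<Sum>k\<in>{1..N}. (if k \<le> v then 1 else 0::nat)) = v"
proof -
  assume "v \<le> N"
  have e: "{Suc 0..N} \<inter> {k. k \<le> v} = {Suc 0..v}" using \<open>v \<le> N\<close> by auto
  show ?thesis by (simp add: sum.If_cases e)
qed

lemma mult_le_self: assumes "prime (p::nat)" "m > 0" shows "multiplicity p m \<le> m"
proof -
  have "p ^ multiplicity p m dvd m" by (rule multiplicity_dvd)
  hence "p ^ multiplicity p m \<le> m" using assms by (intro dvd_imp_le) auto
  moreover have "multiplicity p m < 2 ^ multiplicity p m" by simp
  moreover have "2 ^ multiplicity p m \<le> p ^ multiplicity p m"
    using prime_ge_2_nat[OF assms(1)] by (intro power_mono) auto
  ultimately show ?thesis by linarith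
qed

lemma legendre:
  assumes p: "prime (p::nat)"
  shows "multiplicity p (fact N :: nat) = (\<Sum>k\<in>{1..N}. N div p ^ k)"
proof (induction N)
  case 0 thus ?case by simp
next
  case (Suc N)
  have pe: "prime_elem p" using p by auto
  have nu: "\<not> is_unit p" using p not_prime_unit by blast
  have pk: "p ^ k > 0" for k using p prime_gt_0_nat by simp
  have "multiplicity p (fact (Suc N) :: nat) = multiplicity p (Suc N * fact N)" by (simp add: fact_Suc)
  also have "\<dots> = multiplicity p (Suc N) + multiplicity p (fact N :: nat)"
    by (rule prime_elem_multiplicity_mult_distrib[OF pe]) auto
  finally have L: "multiplicity p (fact (Suc N) :: nat) = multiplicity p (Suc N) + multiplicity p (fact N :: nat)" .
  have "(\<Sum>k\<in>{1..Suc N}. Suc N div p ^ k) = (\<Sum>k\<in>{1..Suc N}. N div p ^ k) + (\<Sum>k\<in>{1..Suc N}. (if p ^ k dvd Suc N then 1 else 0))"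
    by (simp add: Suc_div_eq[OF pk] sum.distrib)
  also have "(\<Sum>k\<in>{1..Suc N}. N div p ^ k) = (\<Sum>k\<in>{1..N}. N div p ^ k) + N div p ^ Suc N"
    by simp
  also have "N div p ^ Suc N = 0"
  proof -
    have "N < 2 ^ Suc N" by (metis less_exp less_SucI power_Suc less_imp_le_nat order_less_le_trans Suc_lessD less_Suc_eq_le)
    also have "(2::nat) ^ Suc N \<le> p ^ Suc N" using prime_ge_2_nat[OF p] by (intro power_mono) auto
    finally show ?thesis by simp
  qed
  also have "(\<Sum>k\<in>{1..Suc N}. (if p ^ k dvd Suc N then 1 else 0::nat)) = (\<Sum>k\<in>{1..Suc N}. (if k \<le> multiplicity p (Suc N) then 1 else 0))"
    using nu by (intro sum.cong refl) (simp add: power_dvd_iff_le_multiplicity)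
  also have "\<dots> = multiplicity p (Suc N)"
    by (rule count_le) (rule mult_le_self[OF p], simp)
  finally show ?case using L Suc by simp
qed

lemma div2_le: "(m::nat) > 0 \<Longrightarrow> (2*n) div m \<le> 2 * (n div m) + (if m \<le> 2*n then 1 else 0)"
proof -
  assume m: "m > 0"
  show ?thesis
  proof (cases "m \<le> 2*n")
    case False thus ?thesis by simp
  next
    case True
    have h: "m * (n div m) + n mod m = n" by simp
    have "2*n = 2*(m * (n div m) + n mod m)" using h by simp
    also have "\<dots> = m * (2*(n div m)) + 2 * (n mod m)" by (simp only: distrib_left mult.left_commute[of 2 m])
    finally have "2*n = m * (2*(n div m)) + 2 * (n mod m)" .
    hence "(2*n) div m = 2*(n div m) + (2 * (n mod m)) div m" using m by simp
    moreover have "2 * (n mod m) < m * 2" using m by simp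
    hence "(2 * (n mod m)) div m < 2" using m by (simp add: div_less_iff_less_mult)
    ultimately show ?thesis using True by simp
  qed
qed

lemma sum_ext_zero:
  assumes "prime (p::nat)"
  shows "(\<Sum>k\<in>{1..2*n}. n div p ^ k) = (\<Sum>k\<in>{1..n}. n div p ^ k)"
proof (rule sum.mono_neutral_right)
  show "\<forall>k\<in>{1..2*n} - {1..n}. n div p ^ k = 0"
  proof
    fix k assume k: "k \<in> {1..2*n} - {1..n}"
    have "n < k" using k by auto
    also have "k < 2 ^ k" by simp
    also have "(2::nat) ^ k \<le> p ^ k" using prime_ge_2_nat[OF assms] by (intro power_mono) auto
    finally show "n div p ^ k = 0" by simp
  qed
qed auto

lemma mult_binom_le:
  assumes p: "prime (p::nat)" and n: "n \<ge> 1"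
  shows "p ^ multiplicity p ((2*n) choose n) \<le> 2*n"
proof -
  define C where "C = (2*n) choose n"
  define S where "S = {k\<in>{1..2*n}. p ^ k \<le> 2*n}"
  have pe: "prime_elem p" using p by auto
  have pk: "p ^ k > 0" for k using p prime_gt_0_nat by simp
  have C0: "C \<noteq> 0" unfolding C_def by simp
  have "fact n * fact (2*n - n) * C = (fact (2*n) :: nat)" unfolding C_def by (rule binomial_fact_lemma) simp
  hence F: "fact n * fact n * C = (fact (2*n) :: nat)" by simp
  have "multiplicity p (fact (2*n) :: nat) = multiplicity p (fact n * fact n * C :: nat)" using F by simp
  also have "\<dots> = multiplicity p (fact n :: nat) + multiplicity p (fact n :: nat) + multiplicity p C"
    using C0 by (simp add: prime_elem_multiplicity_mult_distrib[OF pe])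
  finally have V: "multiplicity p (fact (2*n) :: nat) = 2 * multiplicity p (fact n :: nat) + multiplicity p C" by simp
  have "(\<Sum>k\<in>{1..2*n}. (2*n) div p ^ k) \<le> (\<Sum>k\<in>{1..2*n}. 2 * (n div p ^ k) + (if p ^ k \<le> 2*n then 1 else 0))"
    by (intro sum_mono div2_le pk)
  also have "\<dots> = 2 * (\<Sum>k\<in>{1..2*n}. n div p ^ k) + card S"
    unfolding S_def by (simp add: sum.distrib sum_distrib_left sum.If_cases Int_def)
  also have "(\<Sum>k\<in>{1..2*n}. n div p ^ k) = multiplicity p (fact n :: nat)"
    using sum_ext_zero[OF p, of n] legendre[OF p, of n] by simp
  finally have "multiplicity p C \<le> card S" using V legendre[OF p, of "2*n"] by simp
  define K where "K = Max (insert 0 S)"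
  have finS: "finite S" unfolding S_def by simp
  have SK: "S \<subseteq> {1..K}" unfolding K_def using finS by (auto simp: S_def)
  hence "card S \<le> K" using card_mono[OF _ SK] by simp
  have "K \<in> insert 0 S" unfolding K_def using finS by (intro Max_in) auto
  hence pK: "p ^ K \<le> 2*n" using n by (auto simp: S_def)
  have "p ^ multiplicity p C \<le> p ^ K"
    using \<open>multiplicity p C \<le> card S\<close> \<open>card S \<le> K\<close> prime_gt_0_nat[OF p]
    by (intro power_increasing) auto
  thus ?thesis using pK unfolding C_def by linarith
qed


lemma fin_theta_set: "finite {p::nat. prime p \<and> real p \<le> x}"
proof (rule finite_subset[of _ "{..nat \<lceil>x\<rceil>}"])
  show "{p::nat. prime p \<and> real p \<le> x} \<subseteq> {..nat \<lceil>x\<rceil>}"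
  proof
    fix p assume "p \<in> {p::nat. prime p \<and> real p \<le> x}"
    hence "real p \<le> x" by auto
    hence "real p \<le> real (nat \<lceil>x\<rceil>)" by linarith
    thus "p \<in> {..nat \<lceil>x\<rceil>}" by simp
  qed
qed simp

lemma theta_mono: "x \<le> y \<Longrightarrow> cheb_theta x \<le> cheb_theta y"
  unfolding cheb_theta_def
  by (intro sum_mono2 fin_theta_set) (auto dest: prime_gt_1_nat)

lemma ln_binom_le:
  fixes n :: nat
  assumes n: "n \<ge> 1"
  shows "ln (real ((2*n) choose n)) \<le> sqrt (2*n) * ln (2*n) + cheb_theta (2*n)"
proof -
  define C where "C = (2*n) choose n"
  define P where "P = prime_factors C"
  have C0: "C > 0" unfolding C_def by simp
  have finP: "finite P" unfolding P_def by simp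
  have primeP: "prime p" if "p \<in> P" for p using that unfolding P_def by auto
  have vle: "p ^ multiplicity p C \<le> 2*n" if "p \<in> P" for p
    unfolding C_def using mult_binom_le[OF primeP[OF that] n] .
  have v1: "multiplicity p C \<ge> 1" if "p \<in> P" for p
    using that unfolding P_def prime_factors_multiplicity by auto
  have h: "C = (\<Prod>p\<in>P. p ^ multiplicity p C)"
    using prime_factorization_nat[OF C0] unfolding P_def .
  have "real C = real (\<Prod>p\<in>P. p ^ multiplicity p C)" by (rule arg_cong[OF h])
  also have "\<dots> = (\<Prod>p\<in>P. real p ^ multiplicity p C)" by simp
  finally have "ln (real C) = ln (\<Prod>p\<in>P. real p ^ multiplicity p C)" by simp
  also have "\<dots> = (\<Sum>p\<in>P. ln (real p ^ multiplicity p C))"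
    using primeP finP by (subst ln_prod) (auto simp: prime_gt_0_nat)
  finally have "ln (real C) = (\<Sum>p\<in>P. ln (real p ^ multiplicity p C))" .
  also have "\<dots> \<le> (\<Sum>p\<in>P. (if p * p \<le> 2*n then ln (2*n) else 0) + ln (real p))"
  proof (intro sum_mono)
    fix p assume pP: "p \<in> P"
    have p2: "p \<ge> 2" using prime_ge_2_nat primeP pP by blast
    have lnp: "ln (real p) \<ge> 0" using p2 by simp
    have pw: "real p ^ multiplicity p C \<le> 2 * real n"
    proof -
      have "real (p ^ multiplicity p C) \<le> real (2*n)" using vle[OF pP] by (rule of_nat_mono)
      thus ?thesis by simp
    qed
    have pos: "real p ^ multiplicity p C > 0" using p2 by simp
    show "ln (real p ^ multiplicity p C) \<le> (if p * p \<le> 2*n then ln (2*n) else 0) + ln (real p)"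
    proof (cases "p * p \<le> 2*n")
      case True
      have "ln (real p ^ multiplicity p C) \<le> ln (2 * real n)" using pw pos n by (subst ln_le_cancel_iff) auto
      thus ?thesis using True lnp by simp
    next
      case False
      have "multiplicity p C \<le> 1"
      proof (rule ccontr)
        assume "\<not> multiplicity p C \<le> 1"
        hence "p ^ 2 \<le> p ^ multiplicity p C" using p2 by (intro power_increasing) auto
        thus False using vle[OF pP] False by (simp add: power2_eq_square)
      qed
      hence "multiplicity p C = 1" using v1[OF pP] by simp
      thus ?thesis using False by simp
    qed
  qed
  also have "\<dots> = (\<Sum>p\<in>P. (if p * p \<le> 2*n then ln (2*n) else 0)) + (\<Sum>p\<in>P. ln (real p))"
    by (rule sum.distrib)
  also have "(\<Sum>p\<in>P. (if p * p \<le> 2*n then ln (2*n) else 0)) = card {p\<in>P. p * p \<le> 2*n} * ln (2*n)"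
    using finP by (simp add: sum.If_cases Int_def)
  also have "card {p\<in>P. p * p \<le> 2*n} * ln (2*n) \<le> sqrt (2*n) * ln (2*n)"
  proof -
    have B: "0 \<le> ln (2*n)" using n by simp
    have sub: "{p\<in>P. p * p \<le> 2*n} \<subseteq> {1..nat \<lfloor>sqrt (2*n)\<rfloor>}"
    proof
      fix p assume "p \<in> {p\<in>P. p * p \<le> 2*n}"
      hence pP: "p \<in> P" and pp: "p * p \<le> 2*n" by auto
      have "real (p * p) \<le> real (2 * n)" using pp by (rule of_nat_mono)
      hence "real p * real p \<le> 2 * real n" by simp
      hence "sqrt (real p * real p) \<le> sqrt (2 * real n)" by (rule real_sqrt_le_mono)
      hence "real p \<le> sqrt (2 * real n)" by simp
      hence "p \<le> nat \<lfloor>sqrt (2*n)\<rfloor>" by (simp add: le_nat_iff le_floor_iff)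
      moreover have "p \<ge> 1" using primeP[OF pP] prime_gt_0_nat by (simp add: Suc_le_eq)
      ultimately show "p \<in> {1..nat \<lfloor>sqrt (2*n)\<rfloor>}" by simp
    qed
    have "card {p\<in>P. p * p \<le> 2*n} \<le> nat \<lfloor>sqrt (2*n)\<rfloor>"
      using card_mono[OF _ sub] by simp
    hence "real (card {p\<in>P. p * p \<le> 2*n}) \<le> real (nat \<lfloor>sqrt (2*n)\<rfloor>)" by linarith
    also have "\<dots> \<le> sqrt (2*n)" by simp
    finally have A: "real (card {p\<in>P. p * p \<le> 2*n}) \<le> sqrt (2*n)" .
    show ?thesis using mult_right_mono[OF A B] by simp
  qed
  also have "(\<Sum>p\<in>P. ln (real p)) \<le> cheb_theta (2*n)"
    unfolding cheb_theta_def
  proof (intro sum_mono2 fin_theta_set)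
    show "P \<subseteq> {p. prime p \<and> real p \<le> real (2 * n)}"
    proof
      fix p assume pP: "p \<in> P"
      have "p ^ 1 \<le> p ^ multiplicity p C" using v1[OF pP] primeP[OF pP] prime_gt_0_nat
        by (intro power_increasing) (auto simp: Suc_le_eq)
      hence "p \<le> p ^ multiplicity p C" by simp
      hence "p \<le> 2*n" using vle[OF pP] by linarith
      thus "p \<in> {p. prime p \<and> real p \<le> real (2 * n)}" using primeP[OF pP] by simp
    qed
    show "\<And>x. x \<in> {p. prime p \<and> real p \<le> real (2 * n)} - P \<Longrightarrow> 0 \<le> ln (real x)"
      by (auto dest: prime_gt_1_nat)
  qed
  finally show ?thesis unfolding C_def by simp
qed

lemma theta_2n_lower:
  fixes n :: nat
  assumes n: "n \<ge> 1"
  shows "cheb_theta (2*n) \<ge> n * ln 4 - ln (2*n) - sqrt (2*n) * ln (2*n)"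
proof -
  have lb: "4^n / (2*real n) \<le> real ((2*n) choose n)" using central_binomial_lower_bound n by simp
  have pos: "4^n / (2*real n) > 0" using n by simp
  have "ln (4^n / (2*real n)) = n * ln 4 - ln (2*n)"
    using n by (simp add: ln_div ln_realpow)
  moreover have "ln (4^n / (2*real n)) \<le> ln (real ((2*n) choose n))" using lb pos by simp
  ultimately show ?thesis using ln_binom_le[OF n] by linarith
qed

lemma ln4_ge1: "ln (4::real) \<ge> 1"
proof -
  have "exp 1 \<le> (4::real)" using exp_le by simp
  thus ?thesis by (simp add: ln_ge_iff)
qed

lemma theta_lower_ev: "\<forall>\<^sub>F x in at_top. cheb_theta x \<ge> x / 4"
proof -
  have ev1: "\<forall>\<^sub>F x in at_top. (x/2 - 1) - ln x - sqrt x * ln x \<ge> x / 4"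
    by real_asymp
  have ev: "\<forall>\<^sub>F x in at_top. (x/2 - 1) - ln x - sqrt x * ln x \<ge> x / 4 \<and> x \<ge> 4"
    using ev1 eventually_ge_at_top[of "4::real"] by (rule eventually_conj)
  show ?thesis using ev
  proof (rule eventually_mono)
    fix x :: real assume hx: "(x/2 - 1) - ln x - sqrt x * ln x \<ge> x / 4 \<and> x \<ge> 4"
    define n where "n = nat \<lfloor>x/2\<rfloor>"
    have n1: "n \<ge> 1" unfolding n_def using hx by (simp add: le_nat_iff le_floor_iff)
    have n2: "2 * real n \<le> x" unfolding n_def using hx by linarith
    have n3: "2 * real n \<ge> x - 2" unfolding n_def using hx by linarith
    have "cheb_theta x \<ge> cheb_theta (2 * real n)" using n2 by (intro theta_mono) simp
    moreover have "cheb_theta (2 * real n) \<ge> n * ln 4 - ln (2 * real n) - sqrt (2 * real n) * ln (2 * real n)"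
      using theta_2n_lower[OF n1] by simp
    moreover have "n * ln 4 \<ge> n" using mult_left_mono[OF ln4_ge1, of "real n"] by simp
    moreover have "ln (2 * real n) \<le> ln x" using n1 n2 by simp
    moreover have "sqrt (2 * real n) * ln (2 * real n) \<le> sqrt x * ln x"
      using n1 n2 by (intro mult_mono) auto
    moreover have "(x/2 - 1) - ln x - sqrt x * ln x \<ge> x / 4" using hx by simp
    ultimately show "cheb_theta x \<ge> x / 4" using n3 by linarith
  qed
qed


lemma dnc_ge:
  assumes "p \<in> prime_factors M"
  shows "dnc M p \<ge> p" "dnc M p \<ge> p ^ (multiplicity p M - 1) * (p - 1)"
    "dnc M p * p \<ge> p ^ multiplicity p M * (p - 1)"
proof -
  have pr: "prime p" using assms by auto
  hence p2: "p \<ge> 2" by (rule prime_ge_2_nat)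
  have v1: "multiplicity p M \<ge> 1" using assms unfolding prime_factors_multiplicity by auto
  show "dnc M p \<ge> p ^ (multiplicity p M - 1) * (p - 1)"
    unfolding dnc_def using v1 by auto
  show "dnc M p \<ge> p"
  proof (cases "multiplicity p M = 1")
    case True thus ?thesis unfolding dnc_def by simp
  next
    case False
    hence "p ^ 1 \<le> p ^ (multiplicity p M - 1)" using v1 p2 by (intro power_increasing) auto
    moreover have "1 \<le> p - 1" using p2 by simp
    ultimately have "p * 1 \<le> p ^ (multiplicity p M - 1) * (p - 1)" by (intro mult_mono) auto
    thus ?thesis unfolding dnc_def using False by simp
  qed
  show "dnc M p * p \<ge> p ^ multiplicity p M * (p - 1)"
  proof (cases "multiplicity p M = 1")
    case True thus ?thesis unfolding dnc_def by simp
  next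
    case False
    have e: "p ^ multiplicity p M = p ^ (multiplicity p M - 1) * p"
      using v1 by (metis Suc_diff_le diff_Suc_1 power_Suc2)
    show ?thesis unfolding dnc_def using False e by (simp add: algebra_simps)
  qed
qed

lemma upc_missing: "multiplicity p M = 0 \<Longrightarrow> upc M p = p" by (simp add: upc_def)

lemma notin_pf_mult0: "prime p \<Longrightarrow> p \<notin> prime_factors M \<Longrightarrow> multiplicity p M = 0"
  unfolding prime_factors_multiplicity by auto

lemma upc_present: "p \<in> prime_factors M \<Longrightarrow> upc M p = p ^ multiplicity p M * (p - 1)"
  unfolding upc_def prime_factors_multiplicity by auto

context
  fixes n :: nat
begin

abbreviation "MM \<equiv> landau_g n"
abbreviation "qq \<equiv> Pplus (landau_g n)"

lemma ellM_le: "ell MM \<le> n" using landau_mem by auto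

lemma qq_in: "prime_factors MM \<noteq> {} \<Longrightarrow> qq \<in> prime_factors MM"
  unfolding Pplus_def by (intro Max_in) auto

lemma le_qq: "p \<in> prime_factors MM \<Longrightarrow> p \<le> qq"
  unfolding Pplus_def by (intro Max_ge) auto

lemma X1:
  assumes ne: "prime_factors MM \<noteq> {}"
    and u: "prime u" "u \<notin> prime_factors MM" and v: "prime v" "v \<notin> prime_factors MM"
    and uv: "u \<noteq> v" "u + v \<le> qq" "qq < u * v"
  shows False
proof -
  have q: "qq \<in> prime_factors MM" using qq_in[OF ne] .
  show False
  proof (rule exchange[of "{qq}" "{u,v}" n])
    show "{qq} \<inter> {u, v} = {}" using q u v by auto
    show "\<forall>p\<in>{u, v}. prime p" using u v by auto
    show "{qq} \<subseteq> prime_factors MM" using q by auto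
    have "(\<Sum>p\<in>{u,v}. upc MM p) = u + v"
      using uv u v by (simp add: upc_missing notin_pf_mult0)
    moreover have "dnc MM qq \<ge> qq" using dnc_ge(1)[OF q] .
    ultimately show "ell MM + (\<Sum>p\<in>{u, v}. upc MM p) \<le> n + (\<Sum>p\<in>{qq}. dnc MM p)"
      using ellM_le uv by simp
    show "\<Prod>{qq} < \<Prod>{u, v}" using uv by simp
  qed auto
qed

lemma X2:
  assumes ne: "prime_factors MM \<noteq> {}"
    and p: "prime p" "p \<notin> prime_factors MM" and r: "r \<in> prime_factors MM" "r \<noteq> qq"
    and b: "p + r ^ multiplicity r MM * (r - 1) \<le> qq" "qq < p * r"
  shows False
proof -
  have q: "qq \<in> prime_factors MM" using qq_in[OF ne] .
  have pr: "p \<noteq> r" using p r by auto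
  show False
  proof (rule exchange[of "{qq}" "{p,r}" n])
    show "{qq} \<inter> {p, r} = {}" using q p r by auto
    show "\<forall>x\<in>{p, r}. prime x" using p r by auto
    show "{qq} \<subseteq> prime_factors MM" using q by auto
    have "(\<Sum>x\<in>{p,r}. upc MM x) = p + r ^ multiplicity r MM * (r - 1)"
      using pr p r by (simp add: upc_missing notin_pf_mult0 upc_present)
    moreover have "dnc MM qq \<ge> qq" using dnc_ge(1)[OF q] .
    ultimately show "ell MM + (\<Sum>x\<in>{p, r}. upc MM x) \<le> n + (\<Sum>x\<in>{qq}. dnc MM x)"
      using ellM_le b by simp
    show "\<Prod>{qq} < \<Prod>{p, r}" using pr b by simp
  qed auto
qed

lemma X3:
  assumes ne: "prime_factors MM \<noteq> {}"
    and u: "prime u" "u \<notin> prime_factors MM" and v: "prime v" "v \<notin> prime_factors MM"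
    and t: "t \<in> prime_factors MM" "t \<noteq> qq"
    and uv: "u \<noteq> v" "u + v \<le> qq + t" "qq * t < u * v"
  shows False
proof -
  have q: "qq \<in> prime_factors MM" using qq_in[OF ne] .
  show False
  proof (rule exchange[of "{qq,t}" "{u,v}" n])
    show "{qq,t} \<inter> {u, v} = {}" using q u v t by auto
    show "\<forall>p\<in>{u, v}. prime p" using u v by auto
    show "{qq,t} \<subseteq> prime_factors MM" using q t by auto
    have "(\<Sum>p\<in>{u,v}. upc MM p) = u + v"
      using uv u v by (simp add: upc_missing notin_pf_mult0)
    moreover have "(\<Sum>p\<in>{qq,t}. dnc MM p) = dnc MM qq + dnc MM t" using t by simp
    moreover have "dnc MM qq \<ge> qq" using dnc_ge(1)[OF q] .
    moreover have "dnc MM t \<ge> t" using dnc_ge(1)[OF t(1)] .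
    ultimately show "ell MM + (\<Sum>p\<in>{u, v}. upc MM p) \<le> n + (\<Sum>p\<in>{qq,t}. dnc MM p)"
      using ellM_le uv by simp
    show "\<Prod>{qq,t} < \<Prod>{u, v}" using uv t by simp
  qed auto
qed

lemma X4:
  assumes p: "prime p" "p \<notin> prime_factors MM" and T: "finite T" "T \<subseteq> prime_factors MM"
    and b: "p \<le> (\<Sum>r\<in>T. dnc MM r)" "\<Prod>T < p"
  shows False
proof (rule exchange[of T "{p}" n])
  show "T \<inter> {p} = {}" using p T by auto
  show "ell MM + (\<Sum>x\<in>{p}. upc MM x) \<le> n + (\<Sum>x\<in>T. dnc MM x)"
    using ellM_le b p by (simp add: upc_missing notin_pf_mult0)
qed (use p T b in auto)

end


lemma q_large: "\<forall>\<^sub>F n in at_top. prime_factors (landau_g n) \<noteq> {} \<and> Pplus (landau_g n) \<ge> R"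
proof -
  obtain r :: nat where r: "prime r" "r > R" using bigger_prime by blast
  have r2: "r \<ge> 2" using prime_ge_2_nat[OF r(1)] .
  have "\<forall>n\<ge>2*r*r + r. prime_factors (landau_g n) \<noteq> {} \<and> Pplus (landau_g n) \<ge> R"
  proof (intro allI impI)
    fix n :: nat assume nge: "n \<ge> 2*r*r + r"
    have ex: "\<exists>p\<in>prime_factors (MM n). p \<ge> r"
    proof (rule ccontr)
      assume "\<not> (\<exists>p\<in>prime_factors (MM n). p \<ge> r)"
      hence lt: "\<forall>p\<in>prime_factors (MM n). p < r" by auto
      hence rn: "r \<notin> prime_factors (MM n)" by auto
      hence r0: "multiplicity r (MM n) = 0" using notin_pf_mult0 r(1) by blast
      show False
      proof (cases "ell (MM n) + r \<le> n")
        case True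
        show False
        proof (rule exchange[of "{}" "{r}" n])
          show "ell (MM n) + (\<Sum>p\<in>{r}. upc (MM n) p) \<le> n + (\<Sum>p\<in>{}. dnc (MM n) p)"
            using True r0 by (simp add: upc_missing)
        qed (use r r2 in auto)
      next
        case False
        hence big: "n < ell (MM n) + r" by simp
        have ne: "prime_factors (MM n) \<noteq> {}"
        proof
          assume "prime_factors (MM n) = {}"
          hence "ell (MM n) = 0" unfolding ell_def by simp
          thus False using big nge by simp
        qed
        define m where "m = Max ((\<lambda>p. p ^ multiplicity p (MM n)) ` prime_factors (MM n))"
        have "m \<in> (\<lambda>p. p ^ multiplicity p (MM n)) ` prime_factors (MM n)"
          unfolding m_def using ne by (intro Max_in) auto
        then obtain p0 where p0: "p0 \<in> prime_factors (MM n)" "m = p0 ^ multiplicity p0 (MM n)"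
          by blast
        have "ell (MM n) \<le> of_nat (card (prime_factors (MM n))) * m"
          unfolding ell_def by (rule sum_bounded_above) (unfold m_def, rule Max_ge, auto)
        hence "ell (MM n) \<le> card (prime_factors (MM n)) * m" by simp
        moreover have "card (prime_factors (MM n)) \<le> r"
        proof -
          have "prime_factors (MM n) \<subseteq> {..<r}" using lt by auto
          from card_mono[OF _ this] show ?thesis by simp
        qed
        ultimately have "ell (MM n) \<le> r * m" by (meson le_trans mult_le_mono1)
        hence "2*r*r < r * m" using big nge by linarith
        hence m2: "2*r < m" using r2 by (simp add: mult.assoc mult.left_commute[of r])
        have p02: "p0 \<ge> 2" using p0 prime_ge_2_nat by auto
        have d3: "dnc (MM n) p0 * p0 \<ge> m * (p0 - 1)" using dnc_ge(3)[OF p0(1)] p0(2) by simp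
        have "p0 \<le> (p0 - 1) * 2" using p02 by linarith
        hence "m * p0 \<le> m * ((p0 - 1) * 2)" by (rule mult_le_mono2)
        hence "m * p0 \<le> m * (p0 - 1) * 2" by (simp add: mult.assoc)
        hence "m * p0 \<le> dnc (MM n) p0 * p0 * 2" using d3 by (meson le_trans mult_le_mono1)
        hence "m \<le> dnc (MM n) p0 * 2" using p02 by (simp add: mult.commute mult.left_commute[of p0])
        hence rd: "r \<le> dnc (MM n) p0" using m2 by linarith
        show False
        proof (rule exchange[of "{p0}" "{r}" n])
          show "ell (MM n) + (\<Sum>p\<in>{r}. upc (MM n) p) \<le> n + (\<Sum>p\<in>{p0}. dnc (MM n) p)"
            using ellM_le[of n] r0 rd by (simp add: upc_missing)
          show "\<Prod>{p0} < \<Prod>{r}" using lt p0 by simp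
        qed (use r p0 rn in auto)
      qed
    qed
    then obtain p where p: "p \<in> prime_factors (MM n)" "p \<ge> r" by blast
    hence ne: "prime_factors (MM n) \<noteq> {}" by auto
    have "p \<le> Pplus (MM n)" using le_qq p(1) by simp
    thus "prime_factors (landau_g n) \<noteq> {} \<and> Pplus (landau_g n) \<ge> R" using ne p r by simp
  qed
  thus ?thesis unfolding eventually_at_top_linorder by blast
qed


lemma primes_inf: "infinite {p::nat. prime p}" using primes_infinite by simp

lemma enum0: "enumerate {p::nat. prime p} 0 = 2"
  unfolding enumerate_0 by (rule Least_equality) (auto dest: prime_ge_2_nat)

lemma gap_eta:
  fixes Q x y :: real
  assumes Q: "Q \<ge> 20" and x: "x \<ge> Q/4" and xy: "x < y"
    and eta: "eta3 (Q/4) > 0"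
    and no2: "\<And>a b. prime a \<Longrightarrow> prime b \<Longrightarrow> a < b \<Longrightarrow> x \<le> real a \<Longrightarrow> real b < y \<Longrightarrow> False"
  shows "y - x \<le> (1 - eta3 (Q/4)) * x / eta3 (Q/4)"
proof -
  define P where "P = {p::nat. prime p}"
  define E where "E = enumerate P"
  have inf: "infinite P" unfolding P_def by (rule primes_inf)
  have E0: "E 0 = 2" unfolding E_def P_def by (rule enum0)
  have Ein: "prime (E k)" for k using enumerate_in_set[OF inf, of k] unfolding E_def P_def by simp
  have Elt: "E a < E b \<longleftrightarrow> a < b" for a b unfolding E_def using inf by simp
  define j where "j = (LEAST k. real (E k) \<ge> y)"
  have exk: "\<exists>k. real (E k) \<ge> y"
  proof
    have "nat \<lceil>y\<rceil> \<le> E (nat \<lceil>y\<rceil>)" unfolding E_def by (rule le_enumerate[OF inf])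
    thus "real (E (nat \<lceil>y\<rceil>)) \<ge> y" by linarith
  qed
  have Ej: "real (E j) \<ge> y" unfolding j_def using exk by (rule LeastI_ex)
  have Ebefore: "real (E k) < y" if "k < j" for k
    using not_less_Least[of k "\<lambda>k. real (E k) \<ge> y"] that unfolding j_def by linarith
  obtain k3 where k3: "E k3 = 3" unfolding E_def using enumerate_Ex[OF inf, of 3] by (auto simp: P_def)
  obtain k5 where k5: "E k5 = 5" unfolding E_def using enumerate_Ex[OF inf, of 5] by (auto simp: P_def)
  have "k3 \<noteq> 0"
  proof
    assume "k3 = 0"
    with k3 E0 show False by simp
  qed
  moreover have "k3 < k5" using Elt[of k3 k5] k3 k5 by simp
  moreover have "k5 < j" using Elt[of k5 j] k5 Ej xy x Q by simp
  ultimately have j3: "j \<ge> 3" by linarith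
  have A: "real (E (j-1)) < y" by (rule Ebefore) (use j3 in simp)
  have B: "real (E (j-2)) < x"
  proof (rule ccontr)
    assume "\<not> real (E (j-2)) < x"
    hence "x \<le> real (E (j-2))" by simp
    moreover have "E (j-2) < E (j-1)" using Elt j3 by simp
    ultimately show False using no2[OF Ein Ein _ _ A] by blast
  qed
  have C: "real (E (j-3)) < x"
  proof -
    have "E (j-3) < E (j-2)" using Elt j3 by simp
    thus ?thesis using B by linarith
  qed
  define a where "a = real (E (j-3))"
  define b where "b = real (E j)"
  define \<eta> where "\<eta> = eta3 (Q/4)"
  have b0: "b > 0" unfolding b_def using Ein prime_gt_0_nat by simp
  have ab: "a < b" unfolding a_def b_def using Elt j3 by simp
  have "\<eta> \<le> a / b"
  proof -
    have mem: "a / b \<in> {real (pr (i - 3)) / real (pr i) | i. i \<ge> 4 \<and> real (pr i) > Q/4}"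
    proof -
      have "pr (j+1) = E j" unfolding pr_def E_def P_def by simp
      moreover have "pr (j+1-3) = E (j-3)" unfolding pr_def E_def P_def using j3
        by (simp add: numeral_3_eq_3)
      moreover have "real (E j) > Q/4" using Ej xy x by simp
      ultimately show ?thesis unfolding a_def b_def using j3
        by (intro CollectI exI[of _ "j+1"]) auto
    qed
    have bdd: "bdd_below {real (pr (i - 3)) / real (pr i) | i. i \<ge> 4 \<and> real (pr i) > Q/4}"
      by (rule bdd_belowI[of _ 0]) auto
    show ?thesis unfolding \<eta>_def eta3_def by (rule cInf_lower[OF mem bdd])
  qed
  hence etab: "\<eta> * b \<le> a" using b0 by (simp add: pos_le_divide_eq)
  have eta1: "\<eta> < 1" using \<open>\<eta> \<le> a/b\<close> ab b0 by (simp add: divide_less_eq le_less_trans)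
  have e0: "\<eta> > 0" using eta unfolding \<eta>_def .
  have "y - x < b - a" using Ej C unfolding a_def b_def by linarith
  also have "\<dots> \<le> (1 - \<eta>) * b" using etab by (simp add: algebra_simps)
  also have "b \<le> x / \<eta>"
  proof -
    have "\<eta> * b \<le> x" using etab C unfolding a_def by linarith
    thus ?thesis using e0 by (simp add: le_divide_eq mult.commute)
  qed
  hence "(1 - \<eta>) * b \<le> (1 - \<eta>) * (x / \<eta>)" using eta1 by (intro mult_left_mono) auto
  finally show ?thesis unfolding \<eta>_def by simp
qed


lemma eps1_facts:
  fixes n :: nat and y :: real
  defines "Q \<equiv> real (Pplus (landau_g n))"
  assumes Q0: "Q > 0" and y: "y \<ge> Q/2"
  shows "cheb_theta y \<ge> y * (1 - eps1 n)" "cheb_theta y \<le> y * (1 + eps1 n)" "eps1 n \<ge> 0"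
proof -
  define A where "A = {\<bar>cheb_theta x / x - 1\<bar> | x. x \<ge> Q/2}"
  have e1: "eps1 n = Sup A" unfolding eps1_def A_def Q_def Let_def ..
  have bdd: "bdd_above A"
  proof (rule bdd_aboveI[of _ 1])
    fix z assume "z \<in> A"
    then obtain x where z: "z = \<bar>cheb_theta x / x - 1\<bar>" and x: "x \<ge> Q/2" unfolding A_def by auto
    have xp: "x > 0" using x Q0 by simp
    have "cheb_theta x \<ge> 0" by (rule theta_nonneg)
    moreover have "cheb_theta x \<le> 2 * x" using theta_upper xp by simp
    ultimately have "cheb_theta x / x \<ge> 0" "cheb_theta x / x \<le> 2" using xp by (auto simp: divide_le_eq)
    thus "z \<le> 1" unfolding z by linarith
  qed
  have mem: "\<bar>cheb_theta y / y - 1\<bar> \<in> A" unfolding A_def using y by auto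
  have le: "\<bar>cheb_theta y / y - 1\<bar> \<le> eps1 n" unfolding e1 by (rule cSup_upper[OF mem bdd])
  have yp: "y > 0" using y Q0 by simp
  show "eps1 n \<ge> 0" using le by linarith
  have "cheb_theta y / y \<ge> 1 - eps1 n" using le by linarith
  thus "cheb_theta y \<ge> y * (1 - eps1 n)" using yp by (simp add: le_divide_eq mult.commute)
  have "cheb_theta y / y \<le> 1 + eps1 n" using le by linarith
  thus "cheb_theta y \<le> y * (1 + eps1 n)" using yp by (simp add: divide_le_eq mult.commute)
qed

lemma eps2_facts:
  fixes n :: nat
  defines "Q \<equiv> real (Pplus (landau_g n))"
  shows "eps2 n \<ge> (ln Q / sqrt Q)^2" "eps2 n \<ge> 1 - eta3 (Q/4)"
  unfolding eps2_def Q_def Let_def by auto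

lemma sqrt_eps2:
  fixes n :: nat
  defines "Q \<equiv> real (Pplus (landau_g n))"
  assumes "Q \<ge> 1"
  shows "sqrt (eps2 n) \<ge> ln Q / sqrt Q"
proof -
  have "sqrt ((ln Q / sqrt Q)^2) \<le> sqrt (eps2 n)" using eps2_facts(1)[of n] unfolding Q_def
    by (intro real_sqrt_le_mono) simp
  moreover have "ln Q \<ge> 0" "sqrt Q \<ge> 0" using assms by auto
  ultimately show ?thesis by (simp add: abs_of_nonneg)
qed

lemma sum_ln_card:
  assumes "finite X" "\<forall>p\<in>X. 1 \<le> p \<and> real p \<le> Q"
  shows "(\<Sum>p\<in>X. ln (real p)) \<le> card X * ln Q"
proof -
  have "(\<Sum>p\<in>X. ln (real p)) \<le> (\<Sum>p\<in>X. ln Q)"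
  proof (intro sum_mono)
    fix p assume "p \<in> X"
    hence "1 \<le> p" "real p \<le> Q" using assms by auto
    thus "ln (real p) \<le> ln Q" by simp
  qed
  thus ?thesis by simp
qed

lemma card_le_sqrt:
  assumes "finite X" "\<forall>p\<in>X. 1 \<le> p \<and> real p \<le> s" "s \<ge> 0"
  shows "real (card X) \<le> s"
proof -
  have "X \<subseteq> {1..nat \<lfloor>s\<rfloor>}"
  proof
    fix p assume "p \<in> X"
    hence "1 \<le> p" "real p \<le> s" using assms by auto
    thus "p \<in> {1..nat \<lfloor>s\<rfloor>}" by (simp add: le_nat_iff le_floor_iff)
  qed
  hence "card X \<le> card {1..nat \<lfloor>s\<rfloor>}" by (intro card_mono) auto
  hence "real (card X) \<le> real (nat \<lfloor>s\<rfloor>)" by simp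
  also have "\<dots> \<le> s" using assms(3) by simp
  finally show ?thesis .
qed

context fixes n :: nat
begin

definition SS :: "nat set" where "SS = {p. prime p \<and> p < qq n \<and> p \<notin> prime_factors (MM n)}"

lemma SS_fin: "finite SS" unfolding SS_def by auto

lemma ln_MM_ge: "ln (real (MM n)) \<ge> (\<Sum>p\<in>prime_factors (MM n). ln (real p))"
proof -
  define P where "P = prime_factors (MM n)"
  have M0: "MM n > 0" using landau_mem[of n] by simp
  have primeP: "prime p" if "p \<in> P" for p using that unfolding P_def by auto
  have h: "MM n = (\<Prod>p\<in>P. p ^ multiplicity p (MM n))"
    using prime_factorization_nat[OF M0] unfolding P_def .
  have "real (MM n) = real (\<Prod>p\<in>P. p ^ multiplicity p (MM n))" by (rule arg_cong[OF h])
  also have "\<dots> = (\<Prod>p\<in>P. real p ^ multiplicity p (MM n))" by simp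
  finally have "ln (real (MM n)) = ln (\<Prod>p\<in>P. real p ^ multiplicity p (MM n))" by simp
  also have "\<dots> = (\<Sum>p\<in>P. ln (real p ^ multiplicity p (MM n)))"
    using primeP by (subst ln_prod) (auto simp: prime_gt_0_nat P_def)
  also have "\<dots> = (\<Sum>p\<in>P. multiplicity p (MM n) * ln (real p))"
    using primeP by (intro sum.cong refl) (simp add: ln_realpow prime_gt_0_nat)
  also have "\<dots> \<ge> (\<Sum>p\<in>P. ln (real p))"
  proof (intro sum_mono)
    fix p assume pP: "p \<in> P"
    have "multiplicity p (MM n) \<ge> 1" using pP unfolding P_def prime_factors_multiplicity by auto
    moreover have "ln (real p) \<ge> 0" using prime_ge_2_nat[OF primeP[OF pP]] by simp
    ultimately show "ln (real p) \<le> real (multiplicity p (MM n)) * ln (real p)"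
      using mult_right_mono[of 1 "real (multiplicity p (MM n))" "ln (real p)"] by simp
  qed
  finally show ?thesis unfolding P_def .
qed

lemma L_ge:
  assumes ne: "prime_factors (MM n) \<noteq> {}" and y: "y \<le> real (qq n)"
  shows "ln (real (MM n)) \<ge> cheb_theta y - (\<Sum>p\<in>{p\<in>SS. real p \<le> y}. ln (real p))"
proof -
  define Y where "Y = {p\<in>SS. real p \<le> y}"
  have finY: "finite Y" unfolding Y_def using SS_fin by simp
  have finP: "finite (prime_factors (MM n))" by simp
  have sub: "{p::nat. prime p \<and> real p \<le> y} \<subseteq> prime_factors (MM n) \<union> Y"
  proof
    fix p assume "p \<in> {p::nat. prime p \<and> real p \<le> y}"
    hence p: "prime p" "real p \<le> y" by auto
    hence "p \<le> qq n" using y by linarith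
    show "p \<in> prime_factors (MM n) \<union> Y"
    proof (cases "p \<in> prime_factors (MM n)")
      case False
      hence "p \<noteq> qq n" using qq_in[OF ne] by auto
      with \<open>p \<le> qq n\<close> have "p < qq n" by simp
      thus ?thesis using False p unfolding Y_def SS_def by auto
    qed simp
  qed
  have "cheb_theta y \<le> (\<Sum>p\<in>prime_factors (MM n) \<union> Y. ln (real p))"
    unfolding cheb_theta_def
  proof (rule sum_mono2[OF _ sub])
    show "finite (prime_factors (MM n) \<union> Y)" using finP finY by simp
    fix b assume b: "b \<in> prime_factors (MM n) \<union> Y - {p. prime p \<and> real p \<le> y}"
    have "prime b"
    proof (cases "b \<in> Y")
      case True thus ?thesis unfolding Y_def SS_def by simp
    next
      case False thus ?thesis using b by auto
    qed
    thus "0 \<le> ln (real b)" using prime_ge_2_nat[of b] by simp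
  qed
  also have "\<dots> = (\<Sum>p\<in>prime_factors (MM n). ln (real p)) + (\<Sum>p\<in>Y. ln (real p))"
    using finP finY by (intro sum.union_disjoint) (auto simp: Y_def SS_def)
  finally show ?thesis using ln_MM_ge unfolding Y_def by linarith
qed

end


lemma T_primes: "\<forall>r\<in>{2,3,5,7,11,13,17,19,23,29,31,37,41,43,47,53,59::nat}. prime r"
  by code_simp

lemma T_recip: "(\<Sum>r\<in>{2,3,5,7,11,13,17,19,23,29,31,37,41,43,47,53,59::nat}. 1 / real r) \<ge> 5/3"
  by simp

lemma T_prod: "\<Prod>{2,3,5,7,11,13,17,19,23,29,31,37,41,43,47,53,59::nat} = 1922760350154212639070"
  by simp

context fixes n :: nat
begin

lemma mid_unique:
  assumes ne: "prime_factors (MM n) \<noteq> {}"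
    and a: "a \<in> SS n" and b: "b \<in> SS n" and ab: "a \<noteq> b"
    and as: "sqrt (real (qq n)) < real a" and bs: "sqrt (real (qq n)) < real b"
    and aQ: "real a \<le> real (qq n) / 2" and bQ: "real b \<le> real (qq n) / 2"
  shows False
proof (rule X1[OF ne, of a b])
  show "prime a" "a \<notin> prime_factors (MM n)" "prime b" "b \<notin> prime_factors (MM n)"
    using a b unfolding SS_def by auto
  show "a \<noteq> b" by fact
  have "real (a + b) \<le> real (qq n)" using aQ bQ by simp
  thus "a + b \<le> qq n" by (simp only: of_nat_le_iff)
  have "sqrt (real (qq n)) * sqrt (real (qq n)) < real a * real b"
  proof -
    have "sqrt (real (qq n)) \<ge> 0" by simp
    hence "real a > 0" using as by linarith
    thus ?thesis using as bs by (intro mult_strict_mono) auto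
  qed
  hence "real (qq n) < real (a * b)" by simp
  thus "qq n < a * b" by (simp only: of_nat_less_iff)
qed

lemma EA_bound:
  assumes ne: "prime_factors (MM n) \<noteq> {}" and Q16: "real (qq n) \<ge> 16"
  shows "(\<Sum>p\<in>{p\<in>SS n. real p \<le> real (qq n)/2}. ln (real p)) \<le> (sqrt (real (qq n)) + 1) * ln (real (qq n))"
proof -
  define Q where "Q = real (qq n)"
  define Y1 where "Y1 = {p\<in>SS n. real p \<le> sqrt Q}"
  define Y2 where "Y2 = {p\<in>SS n. sqrt Q < real p \<and> real p \<le> Q/2}"
  have fin1: "finite Y1" "finite Y2" unfolding Y1_def Y2_def using SS_fin[of n] by auto
  have Q16': "16 \<le> Q" using Q16 unfolding Q_def .
  have sQ: "sqrt Q \<le> Q/2"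
  proof -
    have "4 \<le> sqrt Q" using real_sqrt_le_mono[OF Q16'] by simp
    hence "4 * sqrt Q \<le> sqrt Q * sqrt Q" using Q16' by (intro mult_right_mono) auto
    thus ?thesis using Q16' by simp
  qed
  have Y: "{p\<in>SS n. real p \<le> Q/2} = Y1 \<union> Y2" unfolding Y1_def Y2_def using sQ by auto
  have p1: "1 \<le> p" if "p \<in> SS n" for p using that prime_ge_2_nat[of p] unfolding SS_def by simp
  have "(\<Sum>p\<in>Y1 \<union> Y2. ln (real p)) = (\<Sum>p\<in>Y1. ln (real p)) + (\<Sum>p\<in>Y2. ln (real p))"
  proof -
    have "Y1 \<inter> Y2 = {}" unfolding Y1_def Y2_def by auto
    thus ?thesis by (rule sum.union_disjoint[OF fin1(1) fin1(2)])
  qed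
  also have "(\<Sum>p\<in>Y1. ln (real p)) \<le> card Y1 * ln Q"
    using fin1 p1 sQ Q16' by (intro sum_ln_card) (auto simp: Y1_def)
  also have "card Y1 * ln Q \<le> sqrt Q * ln Q"
  proof (intro mult_right_mono)
    show "real (card Y1) \<le> sqrt Q" using fin1 p1 Q16' by (intro card_le_sqrt) (auto simp: Y1_def)
    show "0 \<le> ln Q" using Q16' by simp
  qed
  also have "(\<Sum>p\<in>Y2. ln (real p)) \<le> card Y2 * ln Q"
    using fin1 p1 Q16' by (intro sum_ln_card) (auto simp: Y2_def)
  also have "card Y2 \<le> 1"
  proof -
    have "\<forall>a\<in>Y2. \<forall>b\<in>Y2. a = b"
    proof (intro ballI)
      fix a b assume "a \<in> Y2" "b \<in> Y2"
      thus "a = b" using mid_unique[OF ne, of a b] unfolding Y2_def Q_def by auto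
    qed
    thus ?thesis using card_le_Suc0_iff_eq[OF fin1(2)] by simp
  qed
  hence "card Y2 * ln Q \<le> 1 * ln Q" using Q16' by (intro mult_right_mono) auto
  finally have "(\<Sum>p\<in>Y1 \<union> Y2. ln (real p)) \<le> (sqrt Q + 1) * ln Q" by (simp add: algebra_simps)
  hence "(\<Sum>p\<in>{p\<in>SS n. real p \<le> Q/2}. ln (real p)) \<le> (sqrt Q + 1) * ln Q" unfolding Y .
  thus ?thesis unfolding Q_def .
qed

lemma case1_bound:
  assumes ne: "prime_factors (MM n) \<noteq> {}" and Q16: "real (qq n) \<ge> 16"
    and s: "s \<in> SS n" "real s \<le> sqrt (real (qq n))"
    and p: "p \<in> SS n" "real p > real (qq n) / 2"
  shows "qq n < p + s"
proof (rule ccontr)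
  assume "\<not> qq n < p + s"
  hence le: "s + p \<le> qq n" by simp
  have sQ: "sqrt (real (qq n)) \<le> real (qq n)/2"
  proof -
    have "4 \<le> sqrt (real (qq n))" using Q16 using real_sqrt_le_mono[of 16 "real (qq n)"] by simp
    hence "4 * sqrt (real (qq n)) \<le> sqrt (real (qq n)) * sqrt (real (qq n))" by (intro mult_right_mono) auto
    thus ?thesis using Q16 by simp
  qed
  have s2: "s \<ge> 2" using s prime_ge_2_nat unfolding SS_def by auto
  show False
  proof (rule X1[OF ne, of s p])
    show "prime s" "s \<notin> prime_factors (MM n)" "prime p" "p \<notin> prime_factors (MM n)"
      using s p unfolding SS_def by auto
    show "s \<noteq> p" using s p sQ by auto
    show "s + p \<le> qq n" by fact
    have "real (qq n) < 2 * real p" using p by simp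
    also have "\<dots> \<le> real s * real p" using s2 by (intro mult_right_mono) auto
    finally show "qq n < s * p" by (simp only: of_nat_less_iff of_nat_mult[symmetric])
  qed
qed

end


context fixes n :: nat
begin

lemma above58:
  assumes ne: "prime_factors (MM n) \<noteq> {}" and Qbig: "real (qq n) \<ge> 4 * 10^21"
    and s59: "59 \<le> sqrt (real (qq n))"
    and small: "\<forall>r. prime r \<and> real r \<le> sqrt (real (qq n)) \<longrightarrow> r \<in> prime_factors (MM n)"
    and p: "p \<in> SS n" "real p > real (qq n)/2"
  shows "real p > 5 * real (qq n) / 8"
proof (rule ccontr)
  assume "\<not> real p > 5 * real (qq n) / 8"
  hence p58: "real p \<le> 5 * real (qq n) / 8" by simp
  define Q where "Q = real (qq n)"
  define T where "T = {2,3,5,7,11,13,17,19,23,29,31,37,41,43,47,53,59::nat}"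
  have finT: "finite T" unfolding T_def by simp
  have Tpr: "\<forall>r\<in>T. prime r" unfolding T_def by (rule T_primes)
  have Tle: "\<forall>r\<in>T. r \<le> 59" unfolding T_def by simp
  have Tsum: "(\<Sum>r\<in>T. 1 / real r) \<ge> 5/3" unfolding T_def by (rule T_recip)
  have Tprod: "\<Prod>T = 1922760350154212639070" unfolding T_def by (rule T_prod)
  have pp: "prime p" "p \<notin> prime_factors (MM n)" "p < qq n" using p unfolding SS_def by auto
  have rin: "r \<in> prime_factors (MM n)" if "r \<in> T" for r
  proof -
    have "real r \<le> 59" using Tle that by simp
    hence "real r \<le> sqrt (real (qq n))" using s59 by linarith
    thus ?thesis using small Tpr that by blast
  qed
  have rq: "r \<noteq> qq n" if "r \<in> T" for r
  proof -
    have "real r \<le> 59" using Tle that by simp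
    thus ?thesis using Qbig by auto
  qed
  have dnc_lb: "real (dnc (MM n) r) \<ge> (Q - real p) / real r" if rT: "r \<in> T" for r
  proof -
    have r2: "r \<ge> 2" using Tpr rT prime_ge_2_nat by blast
    have raise: "qq n - p < r ^ multiplicity r (MM n) * (r - 1)"
    proof (rule ccontr)
      assume "\<not> qq n - p < r ^ multiplicity r (MM n) * (r - 1)"
      hence "p + r ^ multiplicity r (MM n) * (r - 1) \<le> qq n" using pp(3) by linarith
      moreover have "qq n < p * r"
      proof -
        have "real (qq n) < 2 * real p" using p by simp
        also have "\<dots> \<le> real p * real r" using r2 by (simp add: mult.commute mult_left_mono)
        finally show ?thesis by (simp only: of_nat_less_iff of_nat_mult[symmetric])
      qed
      ultimately show False using X2[OF ne pp(1) pp(2) rin[OF rT] rq[OF rT]] by blast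
    qed
    have d3: "dnc (MM n) r * r \<ge> r ^ multiplicity r (MM n) * (r - 1)" using dnc_ge(3)[OF rin[OF rT]] .
    hence "qq n - p < dnc (MM n) r * r" using raise by linarith
    hence "real (qq n - p) < real (dnc (MM n) r * r)" by (simp only: of_nat_less_iff)
    hence "Q - real p < real (dnc (MM n) r) * real r" unfolding Q_def using pp(3) by (simp add: of_nat_diff)
    thus ?thesis using r2 by (simp add: divide_le_eq)
  qed
  have "(\<Sum>r\<in>T. (Q - real p) / real r) \<le> (\<Sum>r\<in>T. real (dnc (MM n) r))"
    by (intro sum_mono dnc_lb)
  moreover have "(\<Sum>r\<in>T. (Q - real p) / real r) = (Q - real p) * (\<Sum>r\<in>T. 1 / real r)"
    by (simp add: sum_distrib_left)
  moreover have "(Q - real p) * (\<Sum>r\<in>T. 1 / real r) \<ge> (Q - real p) * (5/3)"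
    using Tsum p58 unfolding Q_def by (intro mult_left_mono) auto
  moreover have "(Q - real p) * (5/3) \<ge> real p" using p58 unfolding Q_def by simp
  ultimately have "real p \<le> real (\<Sum>r\<in>T. dnc (MM n) r)" by simp
  hence sumle: "p \<le> (\<Sum>r\<in>T. dnc (MM n) r)" by (simp only: of_nat_le_iff)
  have "real (\<Prod>T) < real p" using Tprod p Qbig by simp
  hence prodlt: "\<Prod>T < p" by (simp only: of_nat_less_iff)
  show False using X4[OF pp(1) pp(2) finT _ sumle prodlt] rin by blast
qed

lemma case2d_gap:
  assumes ne: "prime_factors (MM n) \<noteq> {}" and Qbig: "real (qq n) \<ge> 20"
    and B58: "\<forall>p\<in>SS n. real p > real (qq n)/2 \<longrightarrow> real p > 5 * real (qq n) / 8"
    and p1: "p1 \<in> SS n" "real p1 > real (qq n)/2"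
    and p2: "p2 \<in> SS n" "real p2 > real (qq n)/2"
    and p12: "p1 < p2" and p1min: "\<forall>p\<in>SS n. real p > real (qq n)/2 \<longrightarrow> p1 \<le> p"
    and eta: "eta3 (real (qq n)/4) \<ge> 1/2"
  shows "(real (qq n) - real p2)^2 \<le> 2 * eps2 n * (real (qq n))^2"
proof -
  define Q where "Q = real (qq n)"
  define x where "x = real p1 + real p2 - Q"
  define y where "y = real p1 * real p2 / Q"
  define \<eta> where "\<eta> = eta3 (Q/4)"
  have Q20: "Q \<ge> 20" unfolding Q_def using Qbig .
  have pp1: "prime p1" "p1 \<notin> prime_factors (MM n)" "p1 < qq n" using p1 unfolding SS_def by auto
  have pp2: "prime p2" "p2 \<notin> prime_factors (MM n)" "p2 < qq n" using p2 unfolding SS_def by auto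
  have p158: "real p1 > 5*Q/8" using B58 p1 unfolding Q_def by blast
  have p258: "real p2 > 5*Q/8" using B58 p2 unfolding Q_def by blast
  have p1Q: "real p1 < Q" using pp1(3) unfolding Q_def by simp
  have p2Q: "real p2 < Q" using pp2(3) unfolding Q_def by simp
  have x4: "x > Q/4" unfolding x_def using p158 p258 by simp
  have yx: "y - x = (Q - real p1) * (Q - real p2) / Q" unfolding x_def y_def using Q20
    by (simp add: field_simps)
  have xy: "x < y"
  proof -
    have "(Q - real p1) * (Q - real p2) / Q > 0" using p1Q p2Q Q20 by simp
    thus ?thesis using yx by simp
  qed
  have sQ: "sqrt Q \<le> Q/4"
  proof -
    have "4 \<le> sqrt Q" using real_sqrt_le_mono[of 16 Q] Q20 by simp
    hence "4 * sqrt Q \<le> sqrt Q * sqrt Q" using Q20 by (intro mult_right_mono) auto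
    thus ?thesis using Q20 by simp
  qed
  have inSS: "t \<in> SS n" if t: "prime t" "x \<le> real t" "real t < y" for t
  proof -
    have "y < real p1"
    proof -
      have "real p1 * real p2 < real p1 * Q" using p2Q p158 Q20 by (intro mult_strict_left_mono) auto
      thus ?thesis unfolding y_def using Q20 by (simp add: divide_less_eq)
    qed
    hence tp1: "real t < real p1" using t by linarith
    have tq: "t < qq n" using tp1 p1Q unfolding Q_def by simp
    have "t \<notin> prime_factors (MM n)"
    proof
      assume tin: "t \<in> prime_factors (MM n)"
      show False
      proof (rule X3[OF ne pp1(1,2) pp2(1,2) tin])
        show "t \<noteq> qq n" using tq by simp
        show "p1 \<noteq> p2" using p12 by simp
        have "real (p1 + p2) \<le> real (qq n + t)" using t(2) unfolding x_def Q_def by simp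
        thus "p1 + p2 \<le> qq n + t" by (simp only: of_nat_le_iff)
        have "Q * real t < real p1 * real p2" using t(3) Q20 unfolding y_def by (simp add: less_divide_eq mult.commute)
        hence "real (qq n * t) < real (p1 * p2)" unfolding Q_def by simp
        thus "qq n * t < p1 * p2" by (simp only: of_nat_less_iff)
      qed
    qed
    thus ?thesis unfolding SS_def using t tq by simp
  qed
  have no2: False if ab: "prime a" "prime b" "a < b" "x \<le> real a" "real b < y" for a b
  proof -
    have bx: "x \<le> real b" using ab by simp
    have ay: "real a < y" using ab by simp
    have aS: "a \<in> SS n" using inSS[OF ab(1) ab(4) ay] .
    have bS: "b \<in> SS n" using inSS[OF ab(2) bx ab(5)] .
    have "y < real p1"
    proof -
      have "real p1 * real p2 < real p1 * Q" using p2Q p158 Q20 by (intro mult_strict_left_mono) auto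
      thus ?thesis unfolding y_def using Q20 by (simp add: divide_less_eq)
    qed
    hence "b < p1" using ab by simp
    hence bQ: "real b \<le> Q/2" using p1min bS unfolding Q_def by force
    have aQ: "real a \<le> Q/2" using bQ ab by simp
    show False
    proof (rule mid_unique[OF ne aS bS])
      show "a \<noteq> b" using ab by simp
      show "sqrt (real (qq n)) < real a" using ab x4 sQ unfolding Q_def by linarith
      show "sqrt (real (qq n)) < real b" using ab x4 sQ unfolding Q_def by linarith
      show "real a \<le> real (qq n) / 2" "real b \<le> real (qq n) / 2" using aQ bQ unfolding Q_def by auto
    qed
  qed
  have eta0: "\<eta> > 0" using eta unfolding \<eta>_def Q_def by simp
  have gap: "y - x \<le> (1 - \<eta>) * x / \<eta>"
    unfolding \<eta>_def by (rule gap_eta[OF Q20 _ xy]) (use x4 eta0 no2 in \<open>auto simp: \<eta>_def\<close>)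
  have e2: "eps2 n \<ge> 1 - \<eta>" using eps2_facts(2)[of n] unfolding \<eta>_def Q_def .
  have xQ: "x \<le> Q" unfolding x_def using p1Q p2Q by simp
  have "y - x \<le> 2 * eps2 n * Q"
  proof (cases "\<eta> \<le> 1")
    case True
    have "(1 - \<eta>) * x / \<eta> \<le> (1 - \<eta>) * Q / \<eta>"
      using True eta0 xQ by (intro divide_right_mono mult_left_mono) auto
    also have "\<dots> \<le> (1 - \<eta>) * Q * 2"
    proof -
      have "1 / \<eta> \<le> 2" using eta unfolding \<eta>_def Q_def by (simp add: divide_le_eq)
      hence "(1 - \<eta>) * Q * (1 / \<eta>) \<le> (1 - \<eta>) * Q * 2" using True Q20 by (intro mult_left_mono) auto
      thus ?thesis by simp
    qed
    also have "\<dots> \<le> 2 * eps2 n * Q" using e2 Q20 by (simp add: mult.commute mult_left_mono)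
    finally show ?thesis using gap by linarith
  next
    case False
    have "(1 - \<eta>) * x / \<eta> < 0" using False eta0 x4 Q20
      by (simp add: divide_neg_pos mult_neg_pos)
    thus ?thesis using gap xy by linarith
  qed
  hence "(Q - real p1) * (Q - real p2) \<le> 2 * eps2 n * Q * Q" using yx Q20 by (simp add: divide_le_eq)
  moreover have "(Q - real p2) * (Q - real p2) \<le> (Q - real p1) * (Q - real p2)"
    using p12 p2Q by (intro mult_right_mono) auto
  ultimately have "(Q - real p2)^2 \<le> 2 * eps2 n * Q^2" by (simp add: power2_eq_square)
  thus ?thesis unfolding Q_def .
qed

end


lemma ln_prime_nonneg: "prime (p::nat) \<Longrightarrow> 0 \<le> ln (real p)"
  using prime_ge_2_nat[of p] by simp

lemma sqrt_lt_self: "(x::real) > 1 \<Longrightarrow> sqrt x < x"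
proof -
  assume x: "x > 1"
  hence s1: "sqrt x > 1" by simp
  hence "sqrt x * 1 < sqrt x * sqrt x" by (intro mult_strict_left_mono) auto
  thus ?thesis using x by simp
qed

lemma theta_split:
  fixes m :: nat and Q :: real
  assumes "m \<ge> 1" "real m - 1 \<le> Q"
  shows "cheb_theta Q = cheb_theta (real m - 1) + (\<Sum>p\<in>{p. prime p \<and> m \<le> p \<and> real p \<le> Q}. ln (real p))"
proof -
  have U: "{p::nat. prime p \<and> real p \<le> Q} = {p. prime p \<and> real p \<le> real m - 1} \<union> {p. prime p \<and> m \<le> p \<and> real p \<le> Q}"
  proof (rule set_eqI)
    fix p :: nat
    have "(real p \<le> real m - 1) = (p < m)" using assms(1) by linarith
    thus "(p \<in> {p::nat. prime p \<and> real p \<le> Q}) = (p \<in> {p. prime p \<and> real p \<le> real m - 1} \<union> {p. prime p \<and> m \<le> p \<and> real p \<le> Q})"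
      using assms(2) by auto
  qed
  have D: "{p::nat. prime p \<and> real p \<le> real m - 1} \<inter> {p. prime p \<and> m \<le> p \<and> real p \<le> Q} = {}"
    using assms(1) by auto
  have f1: "finite {p::nat. prime p \<and> real p \<le> real m - 1}" by (rule fin_theta_set)
  have f2: "finite {p::nat. prime p \<and> m \<le> p \<and> real p \<le> Q}"
    by (rule finite_subset[OF _ fin_theta_set[of Q]]) auto
  show ?thesis unfolding cheb_theta_def U by (rule sum.union_disjoint[OF f1 f2 D])
qed

context fixes n :: nat
begin

lemma main_det:
  assumes ne: "prime_factors (MM n) \<noteq> {}"
    and Qbig: "real (qq n) \<ge> 4 * 10^21" and s59: "59 \<le> sqrt (real (qq n))"
    and thQ: "cheb_theta (real (qq n)) \<ge> real (qq n) / 4"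
    and th58: "cheb_theta (5 * real (qq n) / 8) \<ge> 5 * real (qq n) / 32"
    and n1: "real (qq n) / 4 - (2 * sqrt (real (qq n)) + 1) * ln (real (qq n)) \<ge> real (qq n) / 8"
    and n2: "5 * real (qq n) / 32 - (sqrt (real (qq n)) + 1) * ln (real (qq n)) \<ge> real (qq n) / 8"
    and n3: "ln (real (qq n)) \<ge> 1"
  shows "real (qq n) \<le> ln (real (MM n)) * (1 + 48 * eps n)"
proof -
  define Q where "Q = real (qq n)"
  define L where "L = ln (real (MM n))"
  define e1 where "e1 = eps1 n"
  define se where "se = sqrt (eps2 n)"
  define W where "W = sqrt Q * ln Q"
  define S3 where "S3 = {p\<in>SS n. real p > Q/2}"
  define EA where "EA = (\<Sum>p\<in>{p\<in>SS n. real p \<le> Q/2}. ln (real p))"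
  define E3 where "E3 = (\<Sum>p\<in>S3. ln (real p))"
  define SSum where "SSum = (\<Sum>p\<in>SS n. ln (real p))"
  have Q20: "Q \<ge> 20" using Qbig unfolding Q_def by simp
  have sQ1: "sqrt Q \<ge> 1" using Q20 by simp
  have lnQ: "ln Q \<ge> 1" using n3 unfolding Q_def .
  have e10: "e1 \<ge> 0" unfolding e1_def using eps1_facts(3)[of n Q] Q20 unfolding Q_def by simp
  have thQl: "cheb_theta Q \<ge> Q * (1 - e1)" unfolding e1_def Q_def using eps1_facts(1)[of n] Q20 unfolding Q_def by simp
  have thQu: "cheb_theta Q \<le> Q * (1 + e1)" unfolding e1_def Q_def using eps1_facts(2)[of n] Q20 unfolding Q_def by simp
  have "eps2 n \<ge> 0" using eps2_facts(1)[of n] zero_le_power2[of "ln Q / sqrt Q"] unfolding Q_def by linarith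
  hence se0: "se \<ge> 0" unfolding se_def by simp
  have Qse: "Q * se \<ge> 0" using se0 Q20 by simp
  have Qe1: "Q * e1 \<ge> 0" using e10 Q20 by simp
  have WQ: "W \<le> Q * se"
  proof -
    have "se \<ge> ln Q / sqrt Q" unfolding se_def Q_def using sqrt_eps2[of n] Q20 unfolding Q_def by simp
    hence "sqrt Q * sqrt Q * (ln Q / sqrt Q) \<le> sqrt Q * sqrt Q * se" using Q20 by (intro mult_left_mono) auto
    moreover have "sqrt Q * sqrt Q * (ln Q / sqrt Q) = W"
    proof -
      have "sqrt Q * (ln Q / sqrt Q) = ln Q" using sQ1 by simp
      thus ?thesis unfolding W_def by (simp only: mult.assoc)
    qed
    moreover have "sqrt Q * sqrt Q = Q" using Q20 by simp
    ultimately show ?thesis by simp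
  qed
  have lnW: "ln Q \<le> W" unfolding W_def using sQ1 lnQ mult_right_mono[of 1 "sqrt Q" "ln Q"] by simp
  have EAb: "EA \<le> (sqrt Q + 1) * ln Q" unfolding EA_def Q_def by (rule EA_bound[OF ne]) (use Q20 in \<open>simp add: Q_def\<close>)
  have finSS: "finite (SS n)" by (rule SS_fin)
  have finS3: "finite S3" unfolding S3_def using finSS by simp
  have SSsplit: "SSum = EA + E3"
  proof -
    have "SS n = {p\<in>SS n. real p \<le> Q/2} \<union> S3" unfolding S3_def by auto
    moreover have "{p\<in>SS n. real p \<le> Q/2} \<inter> S3 = {}" unfolding S3_def by auto
    ultimately show ?thesis unfolding SSum_def EA_def E3_def
      using finSS finS3 by (metis (no_types, lifting) finite_Un sum.union_disjoint)
  qed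
  have SSall: "{p\<in>SS n. real p \<le> Q} = SS n" unfolding SS_def Q_def by auto
  have h: "ln (real (MM n)) \<ge> cheb_theta Q - (\<Sum>p\<in>{p\<in>SS n. real p \<le> Q}. ln (real p))"
    by (rule L_ge[OF ne]) (simp add: Q_def)
  have LgeQ: "L \<ge> cheb_theta Q - SSum"
    using h unfolding L_def SSum_def SSall .
  have S3p: "prime p" "real p \<le> Q" "1 \<le> p" if "p \<in> S3" for p
    using that prime_ge_2_nat[of p] unfolding S3_def SS_def Q_def by auto
  have main: "SSum \<le> 3 * (Q * e1) + 6 * (Q * se) \<and> L \<ge> Q/8"
  proof (cases "\<exists>s\<in>SS n. real s \<le> sqrt Q")
    case True
    then obtain s where s: "s \<in> SS n" "real s \<le> sqrt Q" by blast
    have "S3 \<subseteq> {qq n - s..<qq n}"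
    proof
      fix p assume "p \<in> S3"
      hence p: "p \<in> SS n" "real p > Q/2" unfolding S3_def by auto
      have "qq n < p + s" using case1_bound[OF ne _ s[unfolded Q_def] p[unfolded Q_def]] Q20 unfolding Q_def by simp
      moreover have "p < qq n" using p unfolding SS_def by simp
      ultimately show "p \<in> {qq n - s..<qq n}" by simp
    qed
    hence "card S3 \<le> s" using card_mono[of "{qq n - s..<qq n}" S3] by simp
    hence cS3: "real (card S3) \<le> sqrt Q" using s by linarith
    have "E3 \<le> card S3 * ln Q" unfolding E3_def using finS3 S3p by (intro sum_ln_card) auto
    also have "\<dots> \<le> sqrt Q * ln Q" using cS3 lnQ by (intro mult_right_mono) auto
    finally have E3b: "E3 \<le> W" unfolding W_def .
    have "SSum \<le> (2 * sqrt Q + 1) * ln Q" using SSsplit EAb E3b unfolding W_def by (simp add: algebra_simps)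
    hence L8: "L \<ge> Q/8" using LgeQ thQ n1 unfolding Q_def by linarith
    have "SSum \<le> 3 * W" using SSsplit EAb E3b lnW unfolding W_def by (simp add: algebra_simps)
    hence "SSum \<le> 3 * (Q * se)" using WQ by linarith
    thus ?thesis using L8 Qe1 Qse by linarith
  next
    case False
    have small: "\<forall>r. prime r \<and> real r \<le> sqrt (real (qq n)) \<longrightarrow> r \<in> prime_factors (MM n)"
    proof (intro allI impI)
      fix r assume r: "prime r \<and> real r \<le> sqrt (real (qq n))"
      have "sqrt Q < Q" using sqrt_lt_self[of Q] Q20 by simp
      hence "r < qq n" using r unfolding Q_def by simp
      show "r \<in> prime_factors (MM n)"
      proof (rule ccontr)
        assume "r \<notin> prime_factors (MM n)"
        hence "r \<in> SS n" using r \<open>r < qq n\<close> unfolding SS_def by simp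
        thus False using False r unfolding Q_def by auto
      qed
    qed
    have B58: "\<forall>p\<in>SS n. real p > real (qq n)/2 \<longrightarrow> real p > 5 * real (qq n) / 8"
      using above58[OF ne Qbig s59 small] by blast
    have "{p\<in>SS n. real p \<le> 5*Q/8} = {p\<in>SS n. real p \<le> Q/2}"
      using B58 unfolding Q_def by force
    hence "L \<ge> cheb_theta (5*Q/8) - EA"
      using L_ge[OF ne, of "5*Q/8"] Q20 unfolding L_def EA_def Q_def by simp
    hence L8: "L \<ge> Q/8" using th58 n2 EAb unfolding Q_def by linarith
    have EA2: "EA \<le> 2 * W" using EAb lnW unfolding W_def by (simp add: algebra_simps)
    have E3b: "E3 \<le> 3 * (Q * e1) + 4 * (Q * se)"
    proof (cases "card S3 \<le> 1")
      case True
      have "E3 \<le> card S3 * ln Q" unfolding E3_def using finS3 S3p by (intro sum_ln_card) auto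
      also have "\<dots> \<le> 1 * ln Q" using True lnQ by (intro mult_right_mono) auto
      finally show ?thesis using lnW WQ Qe1 Qse by linarith
    next
      case False
      hence c2: "card S3 \<ge> 2" by simp
      show ?thesis
      proof (cases "eta3 (Q/4) \<ge> 1/2")
        case False
        have "eps2 n \<ge> 1 - eta3 (Q/4)" using eps2_facts(2)[of n] unfolding Q_def .
        hence "eps2 n \<ge> 1/4" using False by simp
        hence "se \<ge> sqrt (1/4)" unfolding se_def by (rule real_sqrt_le_mono)
        hence se2: "se \<ge> 1/2" by (simp add: real_sqrt_divide)
        have "E3 \<le> cheb_theta Q" unfolding E3_def cheb_theta_def
        proof (rule sum_mono2[OF fin_theta_set])
          show "S3 \<subseteq> {p. prime p \<and> real p \<le> Q}" using S3p by auto
          show "\<And>b. b \<in> {p. prime p \<and> real p \<le> Q} - S3 \<Longrightarrow> 0 \<le> ln (real b)"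
            by (auto intro: ln_prime_nonneg)
        qed
        also have "\<dots> \<le> Q * (1 + e1)" by (rule thQu)
        also have "\<dots> \<le> 3 * (Q * e1) + 4 * (Q * se)"
        proof -
          have hq: "Q * (1/2) \<le> Q * se" using se2 Q20 by (intro mult_left_mono) auto
          have "Q * (1 + e1) = Q + Q * e1" by (simp add: algebra_simps)
          thus ?thesis using hq Qe1 Q20 by linarith
        qed
        finally show ?thesis .
      next
        case True
        define p1 where "p1 = Min S3"
        have ne3: "S3 \<noteq> {}" using c2 by auto
        have p1S: "p1 \<in> S3" unfolding p1_def using finS3 ne3 by simp
        have p1min: "\<forall>p\<in>S3. p1 \<le> p" unfolding p1_def using finS3 by simp
        define S3' where "S3' = S3 - {p1}"
        have finS3': "finite S3'" unfolding S3'_def using finS3 by simp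
        have ne3': "S3' \<noteq> {}"
        proof
          assume "S3' = {}"
          hence "S3 \<subseteq> {p1}" unfolding S3'_def by auto
          hence "card S3 \<le> 1" using card_mono[of "{p1}" S3] by simp
          thus False using c2 by simp
        qed
        define p2 where "p2 = Min S3'"
        have p2S: "p2 \<in> S3'" unfolding p2_def using finS3' ne3' by simp
        have p2min: "\<forall>p\<in>S3'. p2 \<le> p" unfolding p2_def using finS3' by simp
        have p12: "p1 < p2" using p2S p1min unfolding S3'_def by force
        have p1SS: "p1 \<in> SS n" "real p1 > real (qq n)/2" using p1S unfolding S3_def Q_def by auto
        have p2SS: "p2 \<in> SS n" "real p2 > real (qq n)/2" using p2S unfolding S3'_def S3_def Q_def by auto
        have p1m: "\<forall>p\<in>SS n. real p > real (qq n)/2 \<longrightarrow> p1 \<le> p" using p1min unfolding S3_def Q_def by auto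
        have gap: "(Q - real p2)^2 \<le> 2 * eps2 n * Q^2"
          using case2d_gap[OF ne _ B58 p1SS p2SS p12 p1m] True Q20 unfolding Q_def by simp
        have d2: "Q - real p2 \<le> 3/2 * (Q * se)"
        proof -
          have p2Q: "real p2 \<le> Q" using S3p p2S unfolding S3'_def by auto
          have "Q - real p2 = sqrt ((Q - real p2)^2)" using p2Q by simp
          also have "\<dots> \<le> sqrt (2 * eps2 n * Q^2)" using gap by (rule real_sqrt_le_mono)
          also have "\<dots> = sqrt 2 * se * Q" unfolding se_def using Q20
            by (simp add: real_sqrt_mult)
          also have "\<dots> \<le> 3/2 * se * Q"
          proof -
            have "sqrt 2 \<le> sqrt (9/4::real)" by (intro real_sqrt_le_mono) simp
            hence "sqrt 2 \<le> (3/2::real)" by (simp add: real_sqrt_divide)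
            thus ?thesis using se0 Q20 by (intro mult_right_mono) auto
          qed
          finally show ?thesis by (simp add: algebra_simps)
        qed
        have p258: "real p2 > 5 * Q / 8" using B58 p2SS unfolding Q_def by blast
        have E3s: "E3 = ln (real p1) + (\<Sum>p\<in>S3'. ln (real p))"
          unfolding E3_def S3'_def using finS3 p1S by (simp add: sum.remove)
        have "(\<Sum>p\<in>S3'. ln (real p)) \<le> (\<Sum>p\<in>{p. prime p \<and> p2 \<le> p \<and> real p \<le> Q}. ln (real p))"
        proof (rule sum_mono2)
          show "finite {p. prime p \<and> p2 \<le> p \<and> real p \<le> Q}"
            by (rule finite_subset[OF _ fin_theta_set[of Q]]) auto
          show "S3' \<subseteq> {p. prime p \<and> p2 \<le> p \<and> real p \<le> Q}"
            using S3p p2min unfolding S3'_def by auto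
          show "\<And>b. b \<in> {p. prime p \<and> p2 \<le> p \<and> real p \<le> Q} - S3' \<Longrightarrow> 0 \<le> ln (real b)"
            by (auto intro: ln_prime_nonneg)
        qed
        also have "\<dots> = cheb_theta Q - cheb_theta (real p2 - 1)"
        proof -
          have p2S3: "p2 \<in> S3" using p2S unfolding S3'_def by simp
          have a1: "p2 \<ge> 1" using S3p(3)[OF p2S3] .
          have a2: "real p2 - 1 \<le> Q" using S3p(2)[OF p2S3] by simp
          show ?thesis using theta_split[OF a1 a2] by linarith
        qed
        also have "cheb_theta (real p2 - 1) \<ge> (real p2 - 1) * (1 - e1)"
          using eps1_facts(1)[of n "real p2 - 1"] p258 Q20 unfolding e1_def Q_def by simp
        hence "cheb_theta Q - cheb_theta (real p2 - 1) \<le> Q * (1 + e1) - (real p2 - 1) * (1 - e1)"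
          using thQu by linarith
        also have "\<dots> = (Q - real p2) + 1 + e1 * (Q + real p2 - 1)" by (simp add: algebra_simps)
        also have "\<dots> \<le> 3/2 * (Q * se) + 1 + 2 * (Q * e1)"
        proof -
          have p2S3: "p2 \<in> S3" using p2S unfolding S3'_def by simp
          have "e1 * (Q + real p2 - 1) \<le> e1 * (2 * Q)"
            using e10 S3p(2)[OF p2S3] by (intro mult_left_mono) auto
          hence "e1 * (Q + real p2 - 1) \<le> 2 * (Q * e1)" by (simp add: algebra_simps)
          thus ?thesis using d2 by linarith
        qed
        finally have "(\<Sum>p\<in>S3'. ln (real p)) \<le> 3/2 * (Q * se) + 1 + 2 * (Q * e1)" .
        moreover have "ln (real p1) \<le> ln Q" using S3p[OF p1S] by simp
        ultimately have "E3 \<le> ln Q + 3/2 * (Q * se) + 1 + 2 * (Q * e1)" using E3s by linarith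
        thus ?thesis using lnQ lnW WQ Qe1 Qse by linarith
      qed
    qed
    have "SSum \<le> 3 * (Q * e1) + 6 * (Q * se)" using SSsplit EA2 E3b WQ by linarith
    thus ?thesis using L8 by simp
  qed
  have epsdef: "eps n = e1 + se" unfolding eps_def e1_def se_def ..
  have "Q - L \<le> Q * e1 + SSum" using LgeQ thQl by (simp add: algebra_simps)
  also have "\<dots> \<le> 6 * Q * eps n"
  proof -
    have "6 * Q * eps n = 6 * (Q * e1) + 6 * (Q * se)" unfolding epsdef by (simp add: algebra_simps)
    thus ?thesis using main Qe1 by linarith
  qed
  also have "\<dots> \<le> 48 * L * eps n"
  proof -
    have "eps n \<ge> 0" using e10 se0 unfolding epsdef by simp
    thus ?thesis using main by (simp add: mult_right_mono)
  qed
  finally have "Q \<le> L * (1 + 48 * eps n)" by (simp add: algebra_simps)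
  thus ?thesis unfolding Q_def L_def .
qed

end


theorem mainTheorem16:
  "\<exists>C::real. \<forall>\<^sub>F n in at_top.
     real (Pplus (landau_g n)) \<le> ln (real (landau_g n)) * (1 + C * eps n)"
proof (intro exI[of _ 48])
  obtain X0 where X0: "\<forall>x\<ge>X0. cheb_theta x \<ge> x / 4"
    using theta_lower_ev unfolding eventually_at_top_linorder by blast
  have ev1: "\<forall>\<^sub>F Q in at_top. Q / 4 - (2 * sqrt Q + 1) * ln Q \<ge> Q / 8" by real_asymp
  have ev2: "\<forall>\<^sub>F Q in at_top. 5 * Q / 32 - (sqrt Q + 1) * ln Q \<ge> Q / 8" by real_asymp
  have ev3: "\<forall>\<^sub>F Q::real in at_top. Q \<ge> max (max (4 * 10^21) 3481) (max X0 (8 * X0 / 5))"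
    by (rule eventually_ge_at_top)
  have "\<forall>\<^sub>F Q in at_top. (Q / 4 - (2 * sqrt Q + 1) * ln Q \<ge> Q / 8) \<and>
      (5 * Q / 32 - (sqrt Q + 1) * ln Q \<ge> Q / 8) \<and> Q \<ge> max (max (4 * 10^21) 3481) (max X0 (8 * X0 / 5))"
    using ev1 ev2 ev3 by (intro eventually_conj)
  then obtain Q0 where Q0: "\<forall>Q\<ge>Q0. (Q / 4 - (2 * sqrt Q + 1) * ln Q \<ge> Q / 8) \<and>
      (5 * Q / 32 - (sqrt Q + 1) * ln Q \<ge> Q / 8) \<and> Q \<ge> max (max (4 * 10^21) 3481) (max X0 (8 * X0 / 5))"
    unfolding eventually_at_top_linorder by blast
  show "\<forall>\<^sub>F n in at_top. real (Pplus (landau_g n)) \<le> ln (real (landau_g n)) * (1 + 48 * eps n)"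
    using q_large[of "nat \<lceil>Q0\<rceil>"]
  proof (rule eventually_mono)
    fix n assume h: "prime_factors (landau_g n) \<noteq> {} \<and> nat \<lceil>Q0\<rceil> \<le> Pplus (landau_g n)"
    define Q where "Q = real (Pplus (landau_g n))"
    have QQ0: "Q \<ge> Q0" using h unfolding Q_def by linarith
    have P: "(Q / 4 - (2 * sqrt Q + 1) * ln Q \<ge> Q / 8) \<and>
      (5 * Q / 32 - (sqrt Q + 1) * ln Q \<ge> Q / 8) \<and> Q \<ge> max (max (4 * 10^21) 3481) (max X0 (8 * X0 / 5))"
      using Q0 QQ0 by blast
    have Qb: "Q \<ge> 4 * 10^21" "Q \<ge> 3481" "Q \<ge> X0" "5 * Q / 8 \<ge> X0" using P by auto
    have s59: "59 \<le> sqrt Q"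
    proof -
      have "sqrt 3481 \<le> sqrt Q" using Qb(2) by (rule real_sqrt_le_mono)
      moreover have "sqrt (3481::real) = 59"
      proof -
        have "(3481::real) = 59^2" by simp
        thus ?thesis by simp
      qed
      ultimately show ?thesis by simp
    qed
    have thQ: "cheb_theta Q \<ge> Q / 4" using X0 Qb(3) by blast
    have th58: "cheb_theta (5 * Q / 8) \<ge> 5 * Q / 32" using X0 Qb(4) by fastforce
    have n3: "ln Q \<ge> 1"
    proof -
      have "exp 1 \<le> Q" using exp_le Qb(2) by linarith
      thus ?thesis using Qb(2) by (simp add: ln_ge_iff)
    qed
    show "real (Pplus (landau_g n)) \<le> ln (real (landau_g n)) * (1 + 48 * eps n)"
      using main_det[of n] h Qb(1) s59 thQ th58 P n3 unfolding Q_def by blast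
  qed
qed


end
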